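(* Let $E$ be a Banach space, $\Omega$ a compact Hausdorff space with Borel $\sigma$-field $\Sigma$, let $H$ be a (V)-subset of $M(\Omega,E^* )\cong C(\Omega,E)^*$, and let $(A_m)_{m\in H}$ be a family of sets in $\Sigma$. Then $\{m\chi_{A_m} : m\in H\}$ is a (V)-subset of $M(\Omega,E^* )$.
   Context: $M(\Omega,E^* )$ denotes the Banach space of weak*-regular $E^*$-valued measures of bounded variation on $\Sigma$, normed by $\|m\|=|m|(\Omega)$, identified isometrically with $C(\Omega,E)^*$ via $\langle f,m\rangle=\int f\,dm$. For $m\in M(\Omega,E^* )$ and $A\in\Sigma$, $m\chi_A$ is the measure $B\mapsto m(A\cap B)$. A series $\sum_n x_n$ in a Banach space $X$ is weakly unconditionally Cauchy (WUC) if $\sum_n|x^*(x_n)|<\infty$ for every $x^*\in X^*$. A subset $H\subset X^*$ is a (V)-subset if $\lim_{n\to\infty}\sup_{x^*\in H}|x^*(x_n)|=0$ for every WUC series $\sum_n x_n$ in $X$ (here $X=C(\Omega,E)$). *)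

theory Defs
  imports "HOL-Analysis.Analysis"
begin

definition borel_parts :: "'w::topological_space set \<Rightarrow> 'w set set set" where
  "borel_parts A = {P. finite P \<and> P \<subseteq> sets borel \<and> disjoint P \<and> \<Union>P = A}"

definition variation :: "('w::topological_space set \<Rightarrow> 'b::real_normed_vector) \<Rightarrow> 'w set \<Rightarrow> ereal" where
  "variation \<nu> A = (SUP P \<in> borel_parts A. ereal (\<Sum>B\<in>P. norm (\<nu> B)))"

definition regular_signed_borel :: "('w::topological_space set \<Rightarrow> real) \<Rightarrow> bool" where
  "regular_signed_borel \<mu> \<longleftrightarrow>
     (\<forall>A::nat \<Rightarrow> 'w set. range A \<subseteq> sets borel \<longrightarrow> disjoint_family A \<longrightarrow>
         (\<lambda>n. \<mu> (A n)) sums \<mu> (\<Union>n. A n)) \<and>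
     variation \<mu> UNIV < \<infinity> \<and>
     (\<forall>A\<in>sets borel. \<forall>\<epsilon>>0. \<exists>K U. compact K \<and> open U \<and> K \<subseteq> A \<and> A \<subseteq> U \<and>
         variation \<mu> (U - K) < ereal \<epsilon>)"

text \<open>M(Omega, E*): weak*-regular E*-valued Borel measures of bounded variation.
  A measure is a function on sets, normalised to 0 outside the Borel sets.\<close>
definition Mspace :: "('w::topological_space set \<Rightarrow> ('e::real_normed_vector \<Rightarrow>\<^sub>L real)) set" where
  "Mspace = {m. (\<forall>B. B \<notin> sets borel \<longrightarrow> m B = 0) \<and>
                variation m UNIV < \<infinity> \<and>
                (\<forall>x. regular_signed_borel (\<lambda>B. blinfun_apply (m B) x))}"

text \<open>The duality pairing <f, m> = integral of f dm, for f in C(Omega,E), as the limit of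
  Riemann sums over Borel partitions on whose pieces f oscillates less than delta.\<close>
definition pairing :: "('w::topological_space \<Rightarrow>\<^sub>C 'e::real_normed_vector) \<Rightarrow> ('w set \<Rightarrow> ('e \<Rightarrow>\<^sub>L real)) \<Rightarrow> real" where
  "pairing f m = (THE c. \<forall>\<epsilon>>0. \<exists>\<delta>>0. \<forall>P t. P \<in> borel_parts UNIV \<longrightarrow>
       (\<forall>B\<in>P. \<forall>u\<in>B. \<forall>v\<in>B. dist (f u) (f v) < \<delta>) \<longrightarrow>
       (\<forall>B\<in>P. B \<noteq> {} \<longrightarrow> t B \<in> B) \<longrightarrow>
       \<bar>c - (\<Sum>B\<in>P. blinfun_apply (m B) (f (t B)))\<bar> \<le> \<epsilon>)"

definition restr_meas :: "('w::topological_space set \<Rightarrow> 'b::zero) \<Rightarrow> 'w set \<Rightarrow> ('w set \<Rightarrow> 'b)" where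
  "restr_meas m A = (\<lambda>B. if B \<in> sets borel then m (A \<inter> B) else 0)"

definition WUC :: "(nat \<Rightarrow> 'a::real_normed_vector) \<Rightarrow> bool" where
  "WUC x \<longleftrightarrow> (\<forall>\<phi> :: 'a \<Rightarrow>\<^sub>L real. summable (\<lambda>n. \<bar>blinfun_apply \<phi> (x n)\<bar>))"

definition V_subset :: "('w::topological_space set \<Rightarrow> ('e::real_normed_vector \<Rightarrow>\<^sub>L real)) set \<Rightarrow> bool" where
  "V_subset H \<longleftrightarrow> H \<subseteq> Mspace \<and>
     (\<forall>f :: nat \<Rightarrow> ('w \<Rightarrow>\<^sub>C 'e). WUC f \<longrightarrow>
        (\<forall>\<epsilon>>0. \<exists>N. \<forall>n\<ge>N. \<forall>m\<in>H. \<bar>pairing (f n) m\<bar> \<le> \<epsilon>))"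

end

theory Submission
  imports Defs
begin

lemma ca_empty:
  fixes \<mu> :: "'w::topological_space set \<Rightarrow> real"
  assumes ca: "\<forall>A::nat \<Rightarrow> 'w set. range A \<subseteq> sets borel \<longrightarrow> disjoint_family A \<longrightarrow>
         (\<lambda>n. \<mu> (A n)) sums \<mu> (\<Union>n. A n)"
  shows "\<mu> {} = 0"
proof -
  have "(\<lambda>n. \<mu> ({}::'w set)) sums \<mu> {}"
    using ca[rule_format, of "\<lambda>n. {}"] by (simp add: disjoint_family_on_def)
  hence "(\<lambda>n. \<mu> ({}::'w set)) \<longlonglongrightarrow> 0" using summable_LIMSEQ_zero sums_summable by blast
  thus ?thesis using LIMSEQ_const_iff by blast
qed

lemma ca_add2:
  fixes \<mu> :: "'w::topological_space set \<Rightarrow> real"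
  assumes ca: "\<forall>A::nat \<Rightarrow> 'w set. range A \<subseteq> sets borel \<longrightarrow> disjoint_family A \<longrightarrow>
         (\<lambda>n. \<mu> (A n)) sums \<mu> (\<Union>n. A n)"
    and "S \<in> sets borel" "T \<in> sets borel" "S \<inter> T = {}"
  shows "\<mu> (S \<union> T) = \<mu> S + \<mu> T"
proof -
  define A where "A = (\<lambda>n::nat. if n = 0 then S else if n = 1 then T else {})"
  have r: "range A \<subseteq> sets borel" using assms by (auto simp: A_def)
  have d: "disjoint_family A" using assms(4) by (auto simp: A_def disjoint_family_on_def)
  have u: "(\<Union>n. A n) = S \<union> T"
    by (auto simp: A_def split: if_splits)
  have e: "\<mu> {} = 0" using ca_empty[OF ca] .
  have "(\<lambda>n. \<mu> (A n)) sums (\<Sum>n\<in>{0,1}. \<mu> (A n))"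
    by (rule sums_finite) (auto simp: A_def e)
  moreover have "(\<lambda>n. \<mu> (A n)) sums \<mu> (S \<union> T)" using ca r d u by metis
  ultimately show ?thesis by (simp add: A_def sums_unique2)
qed

lemma Mspace_ca:
  assumes "m \<in> Mspace"
  shows "\<forall>A::nat \<Rightarrow> 'w::topological_space set. range A \<subseteq> sets borel \<longrightarrow> disjoint_family A \<longrightarrow>
         (\<lambda>n. blinfun_apply (m (A n)) x) sums blinfun_apply (m (\<Union>n. A n)) x"
  using assms unfolding Mspace_def regular_signed_borel_def by blast

lemma Mspace_empty: "m \<in> Mspace \<Longrightarrow> m {} = 0"
  by (rule blinfun_eqI) (simp add: ca_empty[OF Mspace_ca[of m]])

lemma Mspace_add2:
  assumes "m \<in> Mspace" "S \<in> sets borel" "T \<in> sets borel" "S \<inter> T = {}"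
  shows "m (S \<union> T) = m S + m T"
  by (rule blinfun_eqI) (simp add: ca_add2[OF Mspace_ca[OF assms(1)] assms(2-4)] blinfun.add_left)

lemma Mspace_sum:
  assumes "m \<in> Mspace" "finite P" "P \<subseteq> sets borel" "disjoint P"
  shows "m (\<Union>P) = (\<Sum>B\<in>P. m B)"
  using assms(2-4)
proof (induction P rule: finite_induct)
  case empty
  then show ?case using Mspace_empty[OF assms(1)] by simp
next
  case (insert C P)
  have d: "disjoint P" using insert.prems(2) by (simp add: pairwise_insert)
  have "C \<inter> \<Union>P = {}" using insert.prems(2) insert.hyps(2)
    by (auto simp: pairwise_insert disjnt_def)
  moreover have "\<Union>P \<in> sets borel" using insert by (intro sets.finite_Union) auto
  ultimately have "m (C \<union> \<Union>P) = m C + m (\<Union>P)"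
    using insert.prems by (intro Mspace_add2[OF assms(1)]) auto
  then show ?case using insert d by simp
qed

lemma var_fam:
  fixes \<nu> :: "'w::topological_space set \<Rightarrow> 'b::real_normed_vector"
  assumes "finite Q" "Q \<subseteq> sets borel" "disjoint Q" "\<Union>Q \<subseteq> S" "S \<in> sets borel"
  shows "ereal (\<Sum>B\<in>Q. norm (\<nu> B)) \<le> variation \<nu> S"
proof -
  define Q' where "Q' = insert (S - \<Union>Q) Q"
  have "Q' \<in> borel_parts S"
    unfolding borel_parts_def Q'_def
  proof (intro CollectI conjI)
    show "finite (insert (S - \<Union> Q) Q)" using assms by simp
    show "insert (S - \<Union> Q) Q \<subseteq> sets borel" using assms by (auto intro!: sets.Diff sets.finite_Union)
    show "disjoint (insert (S - \<Union> Q) Q)" using assms(3)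
      by (auto simp: pairwise_insert disjnt_def)
    show "\<Union> (insert (S - \<Union> Q) Q) = S" using assms(4) by auto
  qed
  have "(\<Sum>B\<in>Q. norm (\<nu> B)) \<le> (\<Sum>B\<in>Q'. norm (\<nu> B))"
    by (rule sum_mono2) (use assms in \<open>auto simp: Q'_def\<close>)
  hence "ereal (\<Sum>B\<in>Q. norm (\<nu> B)) \<le> ereal (\<Sum>B\<in>Q'. norm (\<nu> B))" by simp
  also have "\<dots> \<le> variation \<nu> S" unfolding variation_def
    using \<open>Q' \<in> borel_parts S\<close> by (rule SUP_upper)
  finally show ?thesis .
qed

definition Vm :: "('w::topological_space set \<Rightarrow> 'b::real_normed_vector) \<Rightarrow> real" where
  "Vm \<nu> = real_of_ereal (variation \<nu> UNIV)"

lemma var_real: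
  fixes \<nu> :: "'w::topological_space set \<Rightarrow> 'b::real_normed_vector"
  assumes "variation \<nu> UNIV < \<infinity>" "finite Q" "Q \<subseteq> sets borel" "disjoint Q"
  shows "(\<Sum>B\<in>Q. norm (\<nu> B)) \<le> Vm \<nu>"
proof -
  have "ereal (\<Sum>B\<in>Q. norm (\<nu> B)) \<le> variation \<nu> UNIV"
    by (rule var_fam) (use assms in auto)
  then show ?thesis using assms(1) unfolding Vm_def
    by (cases "variation \<nu> UNIV") auto
qed

lemma Vm_nonneg:
  fixes \<nu> :: "'w::topological_space set \<Rightarrow> 'b::real_normed_vector"
  assumes "variation \<nu> UNIV < \<infinity>"
  shows "0 \<le> Vm \<nu>"
proof -
  have "(\<Sum>B\<in>{}. norm (\<nu> B)) \<le> Vm \<nu>" by (rule var_real) (use assms in auto)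
  thus ?thesis by simp
qed

lemma var_restr:
  fixes \<nu> :: "'w::topological_space set \<Rightarrow> 'b::real_normed_vector"
  assumes "\<nu> {} = 0" "A \<in> sets borel" "S \<in> sets borel"
  shows "variation (restr_meas \<nu> A) S \<le> variation \<nu> S"
  unfolding variation_def[of "restr_meas \<nu> A"]
proof (rule SUP_least)
  fix P assume P: "P \<in> borel_parts S"
  hence Pf: "finite P" "P \<subseteq> sets borel" "disjoint P" "\<Union>P = S" by (auto simp: borel_parts_def)
  have "(\<Sum>B\<in>P. norm (restr_meas \<nu> A B)) = (\<Sum>B\<in>P. norm (\<nu> (A \<inter> B)))"
    using Pf(2) by (intro sum.cong) (auto simp: restr_meas_def)
  also have "\<dots> = (\<Sum>D\<in>(\<inter>) A ` P. norm (\<nu> D))"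
  proof (rule sum.reindex_nontrivial[symmetric, unfolded o_def])
    show "finite P" by fact
    fix x y assume "x \<in> P" "y \<in> P" "x \<noteq> y" "A \<inter> x = A \<inter> y"
    then have "A \<inter> x = {}" using Pf(3) unfolding pairwise_def disjnt_def by blast
    then show "norm (\<nu> (A \<inter> x)) = 0" using assms(1) by simp
  qed
  finally have eq: "(\<Sum>B\<in>P. norm (restr_meas \<nu> A B)) = (\<Sum>D\<in>(\<inter>) A ` P. norm (\<nu> D))" .
  have "ereal (\<Sum>D\<in>(\<inter>) A ` P. norm (\<nu> D)) \<le> variation \<nu> S"
  proof (rule var_fam)
    show "finite ((\<inter>) A ` P)" using Pf by simp
    show "(\<inter>) A ` P \<subseteq> sets borel" using Pf assms by auto
    show "disjoint ((\<inter>) A ` P)" using Pf(3)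
      unfolding pairwise_def disjnt_def by blast
    show "\<Union> ((\<inter>) A ` P) \<subseteq> S" using Pf by auto
  qed fact
  then show "ereal (\<Sum>B\<in>P. norm (restr_meas \<nu> A B)) \<le> variation \<nu> S" using eq by simp
qed

lemma var_mono:
  fixes \<nu> :: "'w::topological_space set \<Rightarrow> 'b::real_normed_vector"
  assumes "S \<subseteq> T" "T \<in> sets borel"
  shows "variation \<nu> S \<le> variation \<nu> T"
  unfolding variation_def[of \<nu> S]
proof (rule SUP_least)
  fix P assume "P \<in> borel_parts S"
  thus "ereal (\<Sum>B\<in>P. norm (\<nu> B)) \<le> variation \<nu> T"
    using assms by (intro var_fam) (auto simp: borel_parts_def)
qed

subsection \<open>Atoms of a finite family\<close>

definition atom :: "'a set set \<Rightarrow> 'a \<Rightarrow> 'a set" where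
  "atom S x = (\<Inter>T\<in>S. if x \<in> T then T else - T)"

definition atoms :: "'a set set \<Rightarrow> 'a set set" where
  "atoms S = range (atom S)"

lemma atom_mem: "x \<in> atom S x"
  by (auto simp: atom_def)

lemma atom_iff: "z \<in> atom S x \<Longrightarrow> T \<in> S \<Longrightarrow> (z \<in> T \<longleftrightarrow> x \<in> T)"
  by (auto simp: atom_def split: if_splits)

lemma atom_sub: "T \<in> S \<Longrightarrow> x \<in> T \<Longrightarrow> atom S x \<subseteq> T"
proof
  fix z assume "T \<in> S" "x \<in> T" "z \<in> atom S x"
  then show "z \<in> T" using atom_iff[of z S x T] by simp
qed

lemma atom_disj: "T \<in> S \<Longrightarrow> x \<notin> T \<Longrightarrow> atom S x \<inter> T = {}"
proof -
  assume a: "T \<in> S" "x \<notin> T"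
  { fix z assume "z \<in> atom S x" "z \<in> T"
    then have False using atom_iff[of z S x T] a by simp }
  then show ?thesis by blast
qed

lemma atom_eq: "(\<And>T. T \<in> S \<Longrightarrow> (x \<in> T \<longleftrightarrow> y \<in> T)) \<Longrightarrow> atom S x = atom S y"
  unfolding atom_def by (intro INF_cong) auto

lemma atoms_finite:
  assumes "finite S" shows "finite (atoms S)"
proof -
  have "atoms S \<subseteq> (\<lambda>U. \<Inter>T\<in>S. if T \<in> U then T else - T) ` Pow S"
  proof
    fix D assume "D \<in> atoms S"
    then obtain x where D: "D = atom S x" by (auto simp: atoms_def)
    have "D = (\<lambda>U. \<Inter>T\<in>S. if T \<in> U then T else - T) {T\<in>S. x \<in> T}"
      unfolding D atom_def by (intro INF_cong) auto
    then show "D \<in> (\<lambda>U. \<Inter>T\<in>S. if T \<in> U then T else - T) ` Pow S" by blast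
  qed
  then show ?thesis using assms by (meson finite_Pow_iff finite_imageI finite_subset)
qed

lemma atoms_disjoint: "disjoint (atoms S)"
unfolding pairwise_def atoms_def
proof (intro ballI impI)
  fix D D' assume "D \<in> range (atom S)" "D' \<in> range (atom S)" "D \<noteq> D'"
  then obtain x y where xy: "D = atom S x" "D' = atom S y" and ne: "atom S x \<noteq> atom S y" by blast
  have "\<exists>T\<in>S. \<not> (x \<in> T \<longleftrightarrow> y \<in> T)"
  proof (rule ccontr)
    assume "\<not> ?thesis"
    then have "atom S x = atom S y" by (intro atom_eq) blast
    then show False using ne by simp
  qed
  then obtain T where T: "T \<in> S" "\<not> (x \<in> T \<longleftrightarrow> y \<in> T)" by blast
  show "disjnt D D'"
    unfolding disjnt_def xy using atom_iff[OF _ T(1)] T(2) by blast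
qed

lemma atoms_union: "\<Union>(atoms S) = UNIV"
proof -
  have "x \<in> \<Union>(atoms S)" for x
    using atom_mem[of x S] unfolding atoms_def by (rule UN_I[rotated]) simp
  then show ?thesis by auto
qed

lemma atoms_nonempty: "D \<in> atoms S \<Longrightarrow> D \<noteq> {}"
  unfolding atoms_def using atom_mem by (metis empty_iff imageE)

lemma atoms_borel:
  assumes "finite S" "S \<subseteq> sets borel"
  shows "atoms S \<subseteq> sets borel"
proof
  fix D assume "D \<in> atoms S"
  then obtain x where D: "D = atom S x" by (auto simp: atoms_def)
  show "D \<in> sets borel"
  proof (cases "S = {}")
    case True then show ?thesis by (simp add: D atom_def)
  next
    case False
    show ?thesis unfolding D atom_def
      by (rule sets.finite_INT) (use assms False in auto)
  qed
qed

lemma atoms_parts: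
  assumes "finite S" "S \<subseteq> sets borel"
  shows "atoms S \<in> borel_parts UNIV"
  using atoms_finite[OF assms(1)] atoms_borel[OF assms] atoms_disjoint[of S] atoms_union[of S]
  unfolding borel_parts_def by simp

lemma atoms_dich:
  assumes "D \<in> atoms S" "T \<in> S"
  shows "D \<subseteq> T \<or> D \<inter> T = {}"
proof -
  obtain x where D: "D = atom S x" using assms by (auto simp: atoms_def)
  show ?thesis
  proof (cases "x \<in> T")
    case True then show ?thesis using D atom_sub[OF assms(2)] by blast
  next
    case False then show ?thesis using D atom_disj[OF assms(2)] by blast
  qed
qed

lemma atoms_refine:
  assumes "D \<in> atoms S" "P \<subseteq> S" "\<Union>P = UNIV"
  shows "\<exists>B\<in>P. D \<subseteq> B"
proof -
  obtain x where D: "D = atom S x" using assms by (auto simp: atoms_def)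
  have "x \<in> \<Union>P" using assms(3) by simp
  then obtain B where "B \<in> P" "x \<in> B" by (rule UnionE)
  moreover have "D \<subseteq> B" using D atom_sub[of B S x] assms(2) \<open>B \<in> P\<close> \<open>x \<in> B\<close> by auto
  ultimately show ?thesis by blast
qed

lemma fine_cover:
  fixes g :: "'w::topological_space \<Rightarrow> 'b::metric_space"
  assumes "compact (UNIV::'w set)" "continuous_on UNIV g" "\<delta> > 0"
  obtains Oc where "finite Oc" "Oc \<subseteq> sets borel" "\<Union>Oc = UNIV"
    "\<forall>B\<in>Oc. \<forall>u\<in>B. \<forall>v\<in>B. dist (g u) (g v) < \<delta>"
proof -
  define F where "F = (\<lambda>u. g -` ball (g u) (\<delta>/2))"
  have op: "open (F u)" for u
  proof -
    have "open (g -` ball (g u) (\<delta>/2) \<inter> UNIV)"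
      using continuous_on_open_vimage[OF open_UNIV, THEN iffD1, OF assms(2)] open_ball by blast
    then show ?thesis by (simp add: F_def)
  qed
  have cov: "UNIV \<subseteq> (\<Union>u\<in>UNIV. F u)"
    using assms(3) by (auto simp: F_def)
  obtain C where C: "finite C" "UNIV \<subseteq> (\<Union>u\<in>C. F u)"
    by (rule compactE_image[OF assms(1) op cov])
  show ?thesis
  proof
    show "finite (F ` C)" using C by simp
    show "F ` C \<subseteq> sets borel" using op by auto
    show "\<Union> (F ` C) = UNIV" using C by auto
    show "\<forall>B\<in>F ` C. \<forall>u\<in>B. \<forall>v\<in>B. dist (g u) (g v) < \<delta>"
    proof (intro ballI)
      fix B u v assume "B \<in> F ` C" "u \<in> B" "v \<in> B"
      then obtain c where "B = F c" by blast
      then have "dist (g c) (g u) < \<delta>/2" "dist (g c) (g v) < \<delta>/2"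
        using \<open>u \<in> B\<close> \<open>v \<in> B\<close> by (auto simp: F_def)
      moreover have "dist (g u) (g v) \<le> dist (g u) (g c) + dist (g c) (g v)" by (rule dist_triangle)
      ultimately show "dist (g u) (g v) < \<delta>" by (simp add: dist_commute)
    qed
  qed
qed

definition tg :: "'a set \<Rightarrow> 'a" where "tg B = (SOME x. x \<in> B)"

lemma tg_in: "B \<noteq> {} \<Longrightarrow> tg B \<in> B"
  unfolding tg_def by (simp add: some_in_eq)

definition RS :: "('w \<Rightarrow> 'e::real_normed_vector) \<Rightarrow> ('w set \<Rightarrow> ('e \<Rightarrow>\<^sub>L real)) \<Rightarrow> 'w set set \<Rightarrow> ('w set \<Rightarrow> 'w) \<Rightarrow> real" where
  "RS g m P t = (\<Sum>B\<in>P. blinfun_apply (m B) (g (t B)))"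

definition osc :: "('w \<Rightarrow> 'b::metric_space) \<Rightarrow> 'w set set \<Rightarrow> real \<Rightarrow> bool" where
  "osc g P \<delta> \<longleftrightarrow> (\<forall>B\<in>P. \<forall>u\<in>B. \<forall>v\<in>B. dist (g u) (g v) \<le> \<delta>)"

definition tags :: "'w set set \<Rightarrow> ('w set \<Rightarrow> 'w) \<Rightarrow> bool" where
  "tags P t \<longleftrightarrow> (\<forall>B\<in>P. B \<noteq> {} \<longrightarrow> t B \<in> B)"

lemma tags_tg: "tags P tg"
  by (simp add: tags_def tg_in)

lemma fine_part:
  fixes g :: "'w::topological_space \<Rightarrow> 'b::metric_space"
  assumes "compact (UNIV::'w set)" "continuous_on UNIV g" "\<delta> > 0"
  obtains P where "P \<in> borel_parts UNIV" "\<forall>B\<in>P. \<forall>u\<in>B. \<forall>v\<in>B. dist (g u) (g v) < \<delta>"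
proof -
  obtain Oc where O: "finite Oc" "Oc \<subseteq> sets borel" "\<Union>Oc = UNIV"
    "\<forall>B\<in>Oc. \<forall>u\<in>B. \<forall>v\<in>B. dist (g u) (g v) < \<delta>"
    using fine_cover[OF assms] by blast
  show ?thesis
  proof
    show "atoms Oc \<in> borel_parts UNIV" using atoms_parts[OF O(1) O(2)] .
    show "\<forall>B\<in>atoms Oc. \<forall>u\<in>B. \<forall>v\<in>B. dist (g u) (g v) < \<delta>"
    proof (intro ballI)
      fix D u v assume "D \<in> atoms Oc" "u \<in> D" "v \<in> D"
      then obtain B where "B \<in> Oc" "D \<subseteq> B" using atoms_refine[OF _ subset_refl O(3)] by blast
      then have "u \<in> B" "v \<in> B" using \<open>u \<in> D\<close> \<open>v \<in> D\<close> by auto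
      then show "dist (g u) (g v) < \<delta>" using O(4) \<open>B \<in> Oc\<close> by simp
    qed
  qed
qed

lemma Mspace_var: "m \<in> Mspace \<Longrightarrow> variation m UNIV < \<infinity>"
  by (simp add: Mspace_def)

lemma RS_ref:
  fixes g :: "'w::topological_space \<Rightarrow> 'e::real_normed_vector"
  assumes m: "m \<in> Mspace" and P: "P \<in> borel_parts UNIV" and osc: "osc g P \<delta>" and t: "tags P t"
    and d0: "0 \<le> \<delta>" and R: "R \<in> borel_parts UNIV" and Rr: "\<forall>D\<in>R. D \<noteq> {} \<and> (\<exists>B\<in>P. D \<subseteq> B)" and s: "tags R s"
  shows "\<bar>RS g m P t - RS g m R s\<bar> \<le> \<delta> * Vm m"
proof -
  have Pf: "finite P" "P \<subseteq> sets borel" "disjoint P" "\<Union>P = UNIV" using P by (auto simp: borel_parts_def)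
  have Rf: "finite R" "R \<subseteq> sets borel" "disjoint R" "\<Union>R = UNIV" using R by (auto simp: borel_parts_def)
  define RB where "RB = (\<lambda>B. {D\<in>R. D \<subseteq> B})"
  have uRB: "\<Union>(RB B) = B" if "B \<in> P" for B
  proof
    show "\<Union>(RB B) \<subseteq> B" by (auto simp: RB_def)
    show "B \<subseteq> \<Union>(RB B)"
    proof
      fix x assume "x \<in> B"
      have "x \<in> \<Union>R" using Rf(4) by simp
      then obtain D where D: "D \<in> R" "x \<in> D" by (rule UnionE)
      then obtain B' where B': "B' \<in> P" "D \<subseteq> B'" using Rr by blast
      have "B = B'"
      proof (rule ccontr)
        assume "B \<noteq> B'"
        then have "B \<inter> B' = {}" using Pf(3) that B'(1) unfolding pairwise_def disjnt_def by blast
        then show False using \<open>x \<in> B\<close> D(2) B'(2) by blast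
      qed
      then show "x \<in> \<Union>(RB B)" using D B' by (auto simp: RB_def)
    qed
  qed
  have mB: "m B = (\<Sum>D\<in>RB B. m D)" if "B \<in> P" for B
  proof -
    have sub: "RB B \<subseteq> R" by (auto simp: RB_def)
    have "m (\<Union>(RB B)) = (\<Sum>D\<in>RB B. m D)"
    proof (rule Mspace_sum[OF m])
      show "finite (RB B)" using finite_subset[OF sub Rf(1)] .
      show "RB B \<subseteq> sets borel" using sub Rf(2) by (rule subset_trans)
      show "disjoint (RB B)" using pairwise_subset[OF Rf(3) sub] .
    qed
    then show ?thesis using uRB[OF that] by simp
  qed
  have Runion: "R = (\<Union>B\<in>P. RB B)"
  proof
    show "R \<subseteq> (\<Union>B\<in>P. RB B)"
    proof
      fix D assume "D \<in> R"
      then obtain B where "B \<in> P" "D \<subseteq> B" using Rr by blast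
      then have "D \<in> RB B" using \<open>D \<in> R\<close> by (simp add: RB_def)
      then show "D \<in> (\<Union>B\<in>P. RB B)" using \<open>B \<in> P\<close> by (rule UN_I[rotated])
    qed
    show "(\<Union>B\<in>P. RB B) \<subseteq> R" by (auto simp: RB_def)
  qed
  have RBdisj: "\<forall>B\<in>P. \<forall>B'\<in>P. B \<noteq> B' \<longrightarrow> RB B \<inter> RB B' = {}"
  proof (intro ballI impI)
    fix B B' assume "B \<in> P" "B' \<in> P" "B \<noteq> B'"
    then have "B \<inter> B' = {}" using Pf(3) unfolding pairwise_def disjnt_def by blast
    { fix D assume "D \<in> RB B" "D \<in> RB B'"
      then have "D \<subseteq> B \<inter> B'" "D \<in> R" by (auto simp: RB_def)
      then have False using \<open>B \<inter> B' = {}\<close> Rr by auto }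
    then show "RB B \<inter> RB B' = {}" by blast
  qed
  have RBfin: "\<forall>B\<in>P. finite (RB B)" using Rf(1) by (auto simp: RB_def)
  have e1: "RS g m P t = (\<Sum>B\<in>P. \<Sum>D\<in>RB B. blinfun_apply (m D) (g (t B)))"
    unfolding RS_def by (intro sum.cong refl) (simp add: mB blinfun.sum_left)
  have e2: "RS g m R s = (\<Sum>B\<in>P. \<Sum>D\<in>RB B. blinfun_apply (m D) (g (s D)))"
    unfolding RS_def by (subst Runion) (rule sum.UNION_disjoint[OF Pf(1) RBfin RBdisj])
  have "RS g m P t - RS g m R s = (\<Sum>B\<in>P. \<Sum>D\<in>RB B. blinfun_apply (m D) (g (t B) - g (s D)))"
    unfolding e1 e2 by (simp add: sum_subtractf blinfun.diff_right)
  also have "\<bar>\<dots>\<bar> \<le> (\<Sum>B\<in>P. \<Sum>D\<in>RB B. \<delta> * norm (m D))"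
  proof -
    have bnd: "\<bar>blinfun_apply (m D) (g (t B) - g (s D))\<bar> \<le> \<delta> * norm (m D)" if "B \<in> P" "D \<in> RB B" for B D
    proof -
      have D: "D \<in> R" "D \<subseteq> B" using that by (auto simp: RB_def)
      have "D \<noteq> {}" using Rr D(1) by blast
      then have "s D \<in> D" using s D(1) by (auto simp: tags_def)
      moreover have "t B \<in> B" using t that(1) \<open>D \<noteq> {}\<close> D(2) by (auto simp: tags_def)
      ultimately have "dist (g (t B)) (g (s D)) \<le> \<delta>" using osc that(1) D(2) by (auto simp: osc_def)
      then have "norm (g (t B) - g (s D)) \<le> \<delta>" by (simp add: dist_norm)
      have "\<bar>blinfun_apply (m D) (g (t B) - g (s D))\<bar> \<le> norm (m D) * norm (g (t B) - g (s D))"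
        using norm_blinfun[of "m D"] by simp
      also have "\<dots> \<le> norm (m D) * \<delta>"
        by (rule mult_left_mono) (fact, simp)
      finally show ?thesis by (simp add: mult.commute)
    qed
    have "\<bar>\<Sum>B\<in>P. \<Sum>D\<in>RB B. blinfun_apply (m D) (g (t B) - g (s D))\<bar>
        \<le> (\<Sum>B\<in>P. \<Sum>D\<in>RB B. \<bar>blinfun_apply (m D) (g (t B) - g (s D))\<bar>)"
      by (rule order_trans[OF sum_abs]) (intro sum_mono sum_abs)
    also have "\<dots> \<le> (\<Sum>B\<in>P. \<Sum>D\<in>RB B. \<delta> * norm (m D))"
      by (intro sum_mono bnd)
    finally show ?thesis .
  qed
  also have "\<dots> = \<delta> * (\<Sum>D\<in>R. norm (m D))"
    by (subst Runion, subst sum.UNION_disjoint[OF Pf(1) RBfin RBdisj]) (simp add: sum_distrib_left)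
  also have "\<dots> \<le> \<delta> * Vm m"
  proof (rule mult_left_mono)
    show "(\<Sum>D\<in>R. norm (m D)) \<le> Vm m" using var_real[OF Mspace_var[OF m]] Rf by blast
    show "0 \<le> \<delta>" by fact
  qed
  finally show ?thesis .
qed

lemma RS_comp:
  fixes g :: "'w::topological_space \<Rightarrow> 'e::real_normed_vector"
  assumes m: "m \<in> Mspace" and P: "P \<in> borel_parts UNIV" "osc g P \<delta>1" "tags P t" "0 \<le> \<delta>1"
    and Q: "Q \<in> borel_parts UNIV" "osc g Q \<delta>2" "tags Q s" "0 \<le> \<delta>2"
  shows "\<bar>RS g m P t - RS g m Q s\<bar> \<le> (\<delta>1 + \<delta>2) * Vm m"
proof -
  have Pf: "finite P" "P \<subseteq> sets borel" "\<Union>P = UNIV" using P by (auto simp: borel_parts_def)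
  have Qf: "finite Q" "Q \<subseteq> sets borel" "\<Union>Q = UNIV" using Q by (auto simp: borel_parts_def)
  define R where "R = atoms (P \<union> Q)"
  have R: "R \<in> borel_parts UNIV" unfolding R_def
    by (rule atoms_parts) (use Pf Qf in auto)
  have RP: "\<forall>D\<in>R. D \<noteq> {} \<and> (\<exists>B\<in>P. D \<subseteq> B)"
    unfolding R_def using atoms_nonempty atoms_refine[OF _ Un_upper1 Pf(3)] by blast
  have RQ: "\<forall>D\<in>R. D \<noteq> {} \<and> (\<exists>B\<in>Q. D \<subseteq> B)"
    unfolding R_def using atoms_nonempty atoms_refine[OF _ Un_upper2 Qf(3)] by blast
  have 1: "\<bar>RS g m P t - RS g m R tg\<bar> \<le> \<delta>1 * Vm m"
    by (rule RS_ref[OF m P(1-3) P(4) R RP tags_tg])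
  have 2: "\<bar>RS g m Q s - RS g m R tg\<bar> \<le> \<delta>2 * Vm m"
    by (rule RS_ref[OF m Q(1-3) Q(4) R RQ tags_tg])
  show ?thesis using 1 2 by (simp add: distrib_right abs_le_iff)
qed

lemma pairing_RS:
  fixes f :: "'w::topological_space \<Rightarrow>\<^sub>C 'e::real_normed_vector"
  assumes cpt: "compact (UNIV :: 'w set)" and m: "m \<in> Mspace"
  shows "\<And>P t \<delta>. P \<in> borel_parts UNIV \<Longrightarrow> osc (apply_bcontfun f) P \<delta> \<Longrightarrow> tags P t \<Longrightarrow> 0 \<le> \<delta> \<Longrightarrow>
           \<bar>pairing f m - RS (apply_bcontfun f) m P t\<bar> \<le> \<delta> * Vm m"
proof -
  define g where "g = apply_bcontfun f"
  have gc: "continuous_on UNIV g" unfolding g_def by simp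
  define V where "V = Vm m"
  have V0: "0 \<le> V" unfolding V_def by (rule Vm_nonneg[OF Mspace_var[OF m]])
  define e where "e = (\<lambda>n::nat. inverse (real (Suc n)))"
  have e0: "0 < e n" for n by (simp add: e_def)
  have emono: "e n \<le> e k" if "k \<le> n" for n k
    unfolding e_def using that by (intro le_imp_inverse_le) auto
  have fine: "\<forall>n. \<exists>P. P \<in> borel_parts UNIV \<and> osc g P (e n)"
  proof
    fix n
    obtain P where "P \<in> borel_parts UNIV" "\<forall>B\<in>P. \<forall>u\<in>B. \<forall>v\<in>B. dist (g u) (g v) < e n"
      using fine_part[OF cpt gc e0] by blast
    then show "\<exists>P. P \<in> borel_parts UNIV \<and> osc g P (e n)"
      unfolding osc_def by (meson less_imp_le)
  qed
  then obtain PP where "\<forall>n. PP n \<in> borel_parts UNIV \<and> osc g (PP n) (e n)"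
    by (rule choice[THEN exE])
  then have PP: "\<And>n. PP n \<in> borel_parts UNIV" "\<And>n. osc g (PP n) (e n)" by auto
  define c where "c = (\<lambda>n. RS g m (PP n) tg)"
  have cc: "\<bar>c n - RS g m P t\<bar> \<le> (e n + \<delta>) * V"
    if "P \<in> borel_parts UNIV" "osc g P \<delta>" "tags P t" "0 \<le> \<delta>" for n P t \<delta>
    unfolding c_def V_def
    by (rule RS_comp[OF m PP(1) PP(2) tags_tg _ that]) (simp add: less_imp_le e0)
  have "Cauchy c"
  proof (rule CauchyI)
    fix \<epsilon> :: real assume "0 < \<epsilon>"
    then have "0 < \<epsilon> / (2 * (V + 1))" using V0 by simp
    then obtain M where M: "e M < \<epsilon> / (2 * (V + 1))" unfolding e_def using reals_Archimedean by blast
    have "\<forall>n\<ge>M. \<forall>k\<ge>M. norm (c n - c k) < \<epsilon>"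
    proof (intro allI impI)
      fix n k assume "M \<le> n" "M \<le> k"
      have "\<bar>c n - c k\<bar> \<le> (e n + e k) * V"
        using cc[OF PP(1)[of k] PP(2)[of k] tags_tg, of n] e0[of k] by (simp add: c_def less_imp_le)
      also have "\<dots> \<le> (2 * e M) * V"
        using emono[OF \<open>M \<le> n\<close>] emono[OF \<open>M \<le> k\<close>] V0 by (intro mult_right_mono) auto
      also have "\<dots> \<le> (\<epsilon> / (V + 1)) * V"
        using M V0 by (intro mult_right_mono) (auto simp: field_simps)
      also have "\<dots> < \<epsilon>" using V0 \<open>0 < \<epsilon>\<close> by (simp add: field_simps)
      finally show "norm (c n - c k) < \<epsilon>" by simp
    qed
    then show "\<exists>M. \<forall>m\<ge>M. \<forall>n\<ge>M. norm (c m - c n) < \<epsilon>" by blast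
  qed
  then obtain c0 where c0: "c \<longlonglongrightarrow> c0" using Cauchy_convergent convergent_def by blast
  have key: "\<bar>c0 - RS g m P t\<bar> \<le> \<delta> * V"
    if "P \<in> borel_parts UNIV" "osc g P \<delta>" "tags P t" "0 \<le> \<delta>" for P t \<delta>
  proof -
    have "(\<lambda>n. \<bar>c n - RS g m P t\<bar>) \<longlonglongrightarrow> \<bar>c0 - RS g m P t\<bar>"
      by (intro tendsto_intros c0)
    moreover have "(\<lambda>n. (e n + \<delta>) * V) \<longlonglongrightarrow> (0 + \<delta>) * V"
      unfolding e_def by (intro tendsto_intros LIMSEQ_inverse_real_of_nat)
    ultimately have "\<bar>c0 - RS g m P t\<bar> \<le> (0 + \<delta>) * V"
      by (rule LIMSEQ_le) (intro exI[of _ 0] allI impI cc[OF that])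
    then show ?thesis by simp
  qed
  have prop_c0: "\<forall>\<epsilon>>0. \<exists>\<delta>>0. \<forall>P t. P \<in> borel_parts UNIV \<longrightarrow>
       (\<forall>B\<in>P. \<forall>u\<in>B. \<forall>v\<in>B. dist (f u) (f v) < \<delta>) \<longrightarrow>
       (\<forall>B\<in>P. B \<noteq> {} \<longrightarrow> t B \<in> B) \<longrightarrow>
       \<bar>c0 - (\<Sum>B\<in>P. blinfun_apply (m B) (f (t B)))\<bar> \<le> \<epsilon>"
  proof (intro allI impI)
    fix \<epsilon> :: real assume "0 < \<epsilon>"
    define \<delta> where "\<delta> = \<epsilon> / (V + 1)"
    have "0 < \<delta>" using \<open>0 < \<epsilon>\<close> V0 by (simp add: \<delta>_def)
    moreover have "\<forall>P t. P \<in> borel_parts UNIV \<longrightarrow>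
       (\<forall>B\<in>P. \<forall>u\<in>B. \<forall>v\<in>B. dist (f u) (f v) < \<delta>) \<longrightarrow>
       (\<forall>B\<in>P. B \<noteq> {} \<longrightarrow> t B \<in> B) \<longrightarrow>
       \<bar>c0 - (\<Sum>B\<in>P. blinfun_apply (m B) (f (t B)))\<bar> \<le> \<epsilon>"
    proof (intro allI impI)
      fix P t assume a: "P \<in> borel_parts UNIV" "\<forall>B\<in>P. \<forall>u\<in>B. \<forall>v\<in>B. dist (f u) (f v) < \<delta>"
        "\<forall>B\<in>P. B \<noteq> {} \<longrightarrow> t B \<in> B"
      have "osc g P \<delta>" using a(2) unfolding osc_def g_def by (meson less_imp_le)
      moreover have "tags P t" using a(3) by (simp add: tags_def)
      ultimately have "\<bar>c0 - RS g m P t\<bar> \<le> \<delta> * V" using key[OF a(1)] \<open>0 < \<delta>\<close> by simp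
      also have "\<delta> * V \<le> \<epsilon>" using V0 \<open>0 < \<epsilon>\<close> by (simp add: \<delta>_def field_simps)
      finally show "\<bar>c0 - (\<Sum>B\<in>P. blinfun_apply (m B) (f (t B)))\<bar> \<le> \<epsilon>"
        by (simp add: RS_def g_def)
    qed
    ultimately show "\<exists>\<delta>>0. \<forall>P t. P \<in> borel_parts UNIV \<longrightarrow>
       (\<forall>B\<in>P. \<forall>u\<in>B. \<forall>v\<in>B. dist (f u) (f v) < \<delta>) \<longrightarrow>
       (\<forall>B\<in>P. B \<noteq> {} \<longrightarrow> t B \<in> B) \<longrightarrow>
       \<bar>c0 - (\<Sum>B\<in>P. blinfun_apply (m B) (f (t B)))\<bar> \<le> \<epsilon>" by blast
  qed
  have "pairing f m = c0"
    unfolding pairing_def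
  proof (rule the_equality)
    show "\<forall>\<epsilon>>0. \<exists>\<delta>>0. \<forall>P t. P \<in> borel_parts UNIV \<longrightarrow>
       (\<forall>B\<in>P. \<forall>u\<in>B. \<forall>v\<in>B. dist (f u) (f v) < \<delta>) \<longrightarrow>
       (\<forall>B\<in>P. B \<noteq> {} \<longrightarrow> t B \<in> B) \<longrightarrow>
       \<bar>c0 - (\<Sum>B\<in>P. blinfun_apply (m B) (f (t B)))\<bar> \<le> \<epsilon>" by (rule prop_c0)
  next
    fix c' assume c': "\<forall>\<epsilon>>0. \<exists>\<delta>>0. \<forall>P t. P \<in> borel_parts UNIV \<longrightarrow>
       (\<forall>B\<in>P. \<forall>u\<in>B. \<forall>v\<in>B. dist (f u) (f v) < \<delta>) \<longrightarrow>
       (\<forall>B\<in>P. B \<noteq> {} \<longrightarrow> t B \<in> B) \<longrightarrow>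
       \<bar>c' - (\<Sum>B\<in>P. blinfun_apply (m B) (f (t B)))\<bar> \<le> \<epsilon>"
    show "c' = c0"
    proof (rule ccontr)
      assume "c' \<noteq> c0"
      define \<epsilon> where "\<epsilon> = \<bar>c' - c0\<bar> / 3"
      have "0 < \<epsilon>" using \<open>c' \<noteq> c0\<close> by (simp add: \<epsilon>_def)
      have "\<exists>\<delta>>0. \<forall>P t. P \<in> borel_parts UNIV \<longrightarrow>
       (\<forall>B\<in>P. \<forall>u\<in>B. \<forall>v\<in>B. dist (f u) (f v) < \<delta>) \<longrightarrow>
       (\<forall>B\<in>P. B \<noteq> {} \<longrightarrow> t B \<in> B) \<longrightarrow>
       \<bar>c' - (\<Sum>B\<in>P. blinfun_apply (m B) (f (t B)))\<bar> \<le> \<epsilon>" by (rule mp[OF spec[OF c', of \<epsilon>] \<open>0 < \<epsilon>\<close>])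
      then obtain \<delta>' where "\<delta>' > 0" and d': "\<forall>P t. P \<in> borel_parts UNIV \<longrightarrow>
       (\<forall>B\<in>P. \<forall>u\<in>B. \<forall>v\<in>B. dist (f u) (f v) < \<delta>') \<longrightarrow>
       (\<forall>B\<in>P. B \<noteq> {} \<longrightarrow> t B \<in> B) \<longrightarrow>
       \<bar>c' - (\<Sum>B\<in>P. blinfun_apply (m B) (f (t B)))\<bar> \<le> \<epsilon>" by (elim exE conjE)
      define \<delta> where "\<delta> = min \<delta>' (\<epsilon> / (V + 1))"
      have "0 < \<delta>" using \<open>\<delta>' > 0\<close> \<open>0 < \<epsilon>\<close> V0 by (simp add: \<delta>_def)
      obtain P where P: "P \<in> borel_parts UNIV" "\<forall>B\<in>P. \<forall>u\<in>B. \<forall>v\<in>B. dist (g u) (g v) < \<delta>"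
        using fine_part[OF cpt gc \<open>0 < \<delta>\<close>] by blast
      have "\<forall>B\<in>P. \<forall>u\<in>B. \<forall>v\<in>B. dist (f u) (f v) < \<delta>'"
      proof (intro ballI)
        fix B u v assume "B \<in> P" "u \<in> B" "v \<in> B"
        then have "dist (g u) (g v) < \<delta>" using P(2) by simp
        then show "dist (f u) (f v) < \<delta>'" unfolding g_def \<delta>_def by simp
      qed
      moreover have "\<forall>B\<in>P. B \<noteq> {} \<longrightarrow> tg B \<in> B" using tg_in by blast
      ultimately have 1: "\<bar>c' - RS g m P tg\<bar> \<le> \<epsilon>"
        using d'[rule_format, OF P(1)] unfolding RS_def g_def by simp
      have "osc g P \<delta>" using P(2) unfolding osc_def by (meson less_imp_le)
      then have "\<bar>c0 - RS g m P tg\<bar> \<le> \<delta> * V" using key[OF P(1) _ tags_tg] \<open>0 < \<delta>\<close> by simp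
      also have "\<dots> \<le> (\<epsilon> / (V + 1)) * V" using V0 by (intro mult_right_mono) (auto simp: \<delta>_def)
      also have "\<dots> \<le> \<epsilon>" using V0 \<open>0 < \<epsilon>\<close> by (simp add: field_simps)
      finally have "\<bar>c' - c0\<bar> \<le> 2 * \<epsilon>" using 1 by linarith
      then show False using \<open>0 < \<epsilon>\<close> by (simp add: \<epsilon>_def)
    qed
  qed
  then show "\<And>P t \<delta>. P \<in> borel_parts UNIV \<Longrightarrow> osc (apply_bcontfun f) P \<delta> \<Longrightarrow> tags P t \<Longrightarrow> 0 \<le> \<delta> \<Longrightarrow>
           \<bar>pairing f m - RS (apply_bcontfun f) m P t\<bar> \<le> \<delta> * Vm m"
    using key unfolding g_def V_def by simp
qed

lemma UNIV_borel: "UNIV \<in> sets borel"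
  by (rule borel_open) simp

lemma restr_regular:
  fixes \<mu> :: "'w::t2_space set \<Rightarrow> real"
  assumes reg: "regular_signed_borel \<mu>" and A: "A \<in> sets borel"
  shows "regular_signed_borel (restr_meas \<mu> A)"
proof -
  note R = reg[unfolded regular_signed_borel_def]
  have ca: "\<forall>A::nat \<Rightarrow> 'w set. range A \<subseteq> sets borel \<longrightarrow> disjoint_family A \<longrightarrow>
         (\<lambda>n. \<mu> (A n)) sums \<mu> (\<Union>n. A n)" using conjunct1[OF R] .
  have vf: "variation \<mu> UNIV < \<infinity>"
    using conjunct1[OF conjunct2[OF R]] .
  have rg: "\<forall>S\<in>sets borel. \<forall>\<epsilon>>0. \<exists>K U. compact K \<and> open U \<and> K \<subseteq> S \<and> S \<subseteq> U \<and>
         variation \<mu> (U - K) < ereal \<epsilon>"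
    using conjunct2[OF conjunct2[OF R]] by simp
  have e: "\<mu> {} = 0" by (rule ca_empty[OF ca])
  show ?thesis unfolding regular_signed_borel_def
  proof (intro conjI allI impI ballI)
    fix An :: "nat \<Rightarrow> 'w set" assume r: "range An \<subseteq> sets borel" and d: "disjoint_family An"
    have r': "range (\<lambda>n. A \<inter> An n) \<subseteq> sets borel" using r A by auto
    have d': "disjoint_family (\<lambda>n. A \<inter> An n)" using d by (auto simp: disjoint_family_on_def)
    have "(\<lambda>n. \<mu> (A \<inter> An n)) sums \<mu> (\<Union>n. A \<inter> An n)"
      using ca[rule_format, OF r' d'] .
    moreover have "(\<Union>n. A \<inter> An n) = A \<inter> (\<Union>n. An n)" by blast
    moreover have "(\<Union>n. An n) \<in> sets borel" using r by auto
    ultimately show "(\<lambda>n. restr_meas \<mu> A (An n)) sums restr_meas \<mu> A (\<Union>n. An n)"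
      using r by (auto simp: restr_meas_def)
  next
    have "variation (restr_meas \<mu> A) UNIV \<le> variation \<mu> UNIV"
      by (rule var_restr[of \<mu> A UNIV, OF e A UNIV_borel])
    then show "variation (restr_meas \<mu> A) UNIV < \<infinity>" using vf by (rule le_less_trans)
  next
    fix S :: "'w set" and \<epsilon> :: real assume S: "S \<in> sets borel" and "0 < \<epsilon>"
    then obtain K U :: "'w set" where KU: "compact K" "open U" "K \<subseteq> S" "S \<subseteq> U" "variation \<mu> (U - K) < ereal \<epsilon>"
      using rg[rule_format, OF S \<open>0 < \<epsilon>\<close>] by (elim exE conjE)
    have "U - K \<in> sets borel"
      using KU(1,2) by (intro sets.Diff borel_open borel_closed compact_imp_closed)
    then have "variation (restr_meas \<mu> A) (U - K) \<le> variation \<mu> (U - K)"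
      by (rule var_restr[of \<mu> A "U - K", OF e A])
    then have "variation (restr_meas \<mu> A) (U - K) < ereal \<epsilon>" using KU(5) by simp
    then show "\<exists>K U. compact K \<and> open U \<and> K \<subseteq> S \<and> S \<subseteq> U \<and>
         variation (restr_meas \<mu> A) (U - K) < ereal \<epsilon>" using KU(1-4) by (intro exI conjI)
  qed
qed

lemma restr_apply:
  "(\<lambda>B. blinfun_apply (restr_meas m A B) x) = restr_meas (\<lambda>B. blinfun_apply (m B) x) A"
  by (rule ext) (simp add: restr_meas_def)

lemma restr_Mspace:
  fixes m :: "'w::t2_space set \<Rightarrow> ('e::real_normed_vector \<Rightarrow>\<^sub>L real)"
  assumes m: "m \<in> Mspace" and A: "A \<in> sets borel"
  shows "restr_meas m A \<in> Mspace"
  unfolding Mspace_def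
proof (intro CollectI conjI allI impI)
  fix B :: "'w set" assume "B \<notin> sets borel"
  then show "restr_meas m A B = 0" by (simp add: restr_meas_def)
next
  have "variation (restr_meas m A) UNIV \<le> variation m UNIV"
    by (rule var_restr[of m A UNIV, OF Mspace_empty[OF m] A UNIV_borel])
  then show "variation (restr_meas m A) UNIV < \<infinity>" using Mspace_var[OF m] by (rule le_less_trans)
next
  fix x
  have "regular_signed_borel (\<lambda>B. blinfun_apply (m B) x)" using m by (simp add: Mspace_def)
  then show "regular_signed_borel (\<lambda>B. blinfun_apply (restr_meas m A B) x)"
    unfolding restr_apply by (rule restr_regular[OF _ A])
qed

lemma normal_euclidean:
  assumes "compact (UNIV::'w::t2_space set)"
  shows "normal_space (euclidean::'w topology)"
proof (rule compact_Hausdorff_or_regular_imp_normal_space)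
  show "compact_space (euclidean::'w topology)" using assms by (simp add: compact_space_def)
  show "Hausdorff_space (euclidean::'w topology) \<or> regular_space euclidean"
    unfolding Hausdorff_space_def disjnt_def using hausdorff by auto
qed

lemma urysohn_real:
  fixes S T :: "'w::t2_space set"
  assumes "compact (UNIV::'w set)" "closed S" "closed T" "S \<inter> T = {}"
  obtains \<phi> :: "'w \<Rightarrow> real" where "continuous_on UNIV \<phi>" "\<forall>x. 0 \<le> \<phi> x \<and> \<phi> x \<le> 1"
    "\<forall>x\<in>S. \<phi> x = 0" "\<forall>x\<in>T. \<phi> x = 1"
proof -
  obtain \<phi> where c: "continuous_map euclidean (top_of_set {0..1::real}) \<phi>" "\<phi> ` S \<subseteq> {0}" "\<phi> ` T \<subseteq> {1}"
    using Urysohn_lemma[OF normal_euclidean[OF assms(1)], of S T 0 1] assms(2-4)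
    by (auto simp: disjnt_def)
  have "continuous_map euclidean euclidean \<phi>" "\<phi> ` UNIV \<subseteq> {0..1}"
    using c(1) unfolding continuous_map_in_subtopology by auto
  then show ?thesis using c(2,3) by (intro that) (auto simp: image_subset_iff)
qed

definition mulc :: "('w::topological_space \<Rightarrow> real) \<Rightarrow> ('w \<Rightarrow>\<^sub>C 'e::real_normed_vector) \<Rightarrow> ('w \<Rightarrow>\<^sub>C 'e)" where
  "mulc \<phi> f = Bcontfun (\<lambda>x. \<phi> x *\<^sub>R apply_bcontfun f x)"

lemma mulc_apply:
  assumes "continuous_on UNIV \<phi>" "\<forall>x. \<bar>\<phi> x\<bar> \<le> 1"
  shows "apply_bcontfun (mulc \<phi> f) x = \<phi> x *\<^sub>R apply_bcontfun f x"
proof -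
  have "(\<lambda>x. \<phi> x *\<^sub>R apply_bcontfun f x) \<in> bcontfun"
  proof (rule bcontfun_normI)
    show "continuous_on UNIV (\<lambda>x. \<phi> x *\<^sub>R apply_bcontfun f x)"
      using assms(1) by (intro continuous_intros) auto
    fix x
    have "norm (\<phi> x *\<^sub>R apply_bcontfun f x) = \<bar>\<phi> x\<bar> * norm (apply_bcontfun f x)" by simp
    also have "\<dots> \<le> 1 * norm f"
      using assms(2) norm_bounded[of f x] by (intro mult_mono) auto
    finally show "norm (\<phi> x *\<^sub>R apply_bcontfun f x) \<le> norm f" by simp
  qed
  then show ?thesis unfolding mulc_def by (simp add: Bcontfun_inverse)
qed

lemma osc_refine:
  assumes "osc g P \<delta>" "\<forall>D\<in>R. \<exists>B\<in>P. D \<subseteq> B"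
  shows "osc g R \<delta>"
  unfolding osc_def
proof (intro ballI)
  fix D u v assume "D \<in> R" "u \<in> D" "v \<in> D"
  then obtain B where "B \<in> P" "D \<subseteq> B" using assms(2) by blast
  then have "u \<in> B" "v \<in> B" using \<open>u \<in> D\<close> \<open>v \<in> D\<close> by auto
  then show "dist (g u) (g v) \<le> \<delta>" using assms(1) \<open>B \<in> P\<close> unfolding osc_def by simp
qed

lemma approx:
  fixes m :: "'w::t2_space set \<Rightarrow> ('e::real_normed_vector \<Rightarrow>\<^sub>L real)" and f :: "'w \<Rightarrow>\<^sub>C 'e"
  assumes cpt: "compact (UNIV::'w set)" and m: "m \<in> Mspace" and A: "A \<in> sets borel" and \<eta>: "0 < \<eta>"
  obtains \<phi> where "continuous_on UNIV \<phi>" "\<forall>x. 0 \<le> \<phi> x \<and> \<phi> x \<le> 1"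
    "\<bar>pairing (mulc \<phi> f) m - pairing f (restr_meas m A)\<bar> \<le> \<eta>"
proof -
  define mr where "mr = restr_meas m A"
  have mr: "mr \<in> Mspace" using restr_Mspace[OF m A] by (simp add: mr_def)
  define V where "V = Vm m"
  define Vr where "Vr = Vm mr"
  have V0: "0 \<le> V" unfolding V_def by (rule Vm_nonneg[OF Mspace_var[OF m]])
  have Vr0: "0 \<le> Vr" unfolding Vr_def by (rule Vm_nonneg[OF Mspace_var[OF mr]])
  define \<delta> where "\<delta> = \<eta> / (4 * (V + Vr + 1))"
  have \<delta>0: "0 < \<delta>" using \<eta> V0 Vr0 by (simp add: \<delta>_def)
  have \<delta>V: "\<delta> * (2 * V + Vr) \<le> \<eta> / 2"
  proof -
    have "\<delta> * (2 * V + Vr) \<le> \<delta> * (2 * (V + Vr + 1))"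
      using \<delta>0 V0 Vr0 by (intro mult_left_mono) auto
    also have "\<dots> = \<eta> / 2" using V0 Vr0 by (simp add: \<delta>_def field_simps)
    finally show ?thesis .
  qed
  have fc: "continuous_on UNIV (apply_bcontfun f)" by simp
  have "compact (range (apply_bcontfun f))" by (rule compact_continuous_image[OF fc cpt])
  then have "\<exists>k. finite k \<and> range (apply_bcontfun f) \<subseteq> (\<Union>x\<in>k. ball x \<delta>)"
    using compact_eq_totally_bounded \<delta>0 by blast
  then obtain X0 where X0: "finite X0" "range (apply_bcontfun f) \<subseteq> (\<Union>x\<in>X0. ball x \<delta>)"
    by (elim exE conjE)
  define \<eta>0 where "\<eta>0 = \<eta> / (4 * (real (card X0) + 1))"
  have \<eta>0: "0 < \<eta>0" using \<eta> by (simp add: \<eta>0_def)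
  have cardb: "real (card X0) * \<eta>0 \<le> \<eta> / 4"
  proof -
    have "real (card X0) * \<eta>0 \<le> (real (card X0) + 1) * \<eta>0" using \<eta>0 by simp
    also have "\<dots> = \<eta> / 4" by (simp add: \<eta>0_def field_simps)
    finally show ?thesis .
  qed
  have "\<forall>x\<in>X0. \<exists>p. compact (fst p) \<and> open (snd p) \<and> fst p \<subseteq> A \<and> A \<subseteq> snd p \<and>
          variation (\<lambda>B. blinfun_apply (m B) x) (snd p - fst p) < ereal \<eta>0"
  proof
    fix x assume "x \<in> X0"
    have "regular_signed_borel (\<lambda>B. blinfun_apply (m B) x)" using m by (simp add: Mspace_def)
    then have "\<forall>S\<in>sets borel. \<forall>\<epsilon>>0. \<exists>K U. compact K \<and> open U \<and> K \<subseteq> S \<and> S \<subseteq> U \<and>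
         variation (\<lambda>B. blinfun_apply (m B) x) (U - K) < ereal \<epsilon>"
      unfolding regular_signed_borel_def by (rule conjunct2[OF conjunct2])
    then obtain K U where "compact K" "open U" "K \<subseteq> A" "A \<subseteq> U"
         "variation (\<lambda>B. blinfun_apply (m B) x) (U - K) < ereal \<eta>0"
      using A \<eta>0 by meson
    then show "\<exists>p. compact (fst p) \<and> open (snd p) \<and> fst p \<subseteq> A \<and> A \<subseteq> snd p \<and>
          variation (\<lambda>B. blinfun_apply (m B) x) (snd p - fst p) < ereal \<eta>0"
      by (intro exI[of _ "(K, U)"]) simp
  qed
  then obtain p where p: "\<forall>x\<in>X0. compact (fst (p x)) \<and> open (snd (p x)) \<and> fst (p x) \<subseteq> A \<and> A \<subseteq> snd (p x) \<and>
          variation (\<lambda>B. blinfun_apply (m B) x) (snd (p x) - fst (p x)) < ereal \<eta>0"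
    by (rule bchoice[THEN exE])
  define K where "K = (\<Union>x\<in>X0. fst (p x))"
  define U where "U = (\<Inter>x\<in>X0. snd (p x))"
  have Kc: "compact K" unfolding K_def using p X0(1) by (intro compact_UN) auto
  have Kcl: "closed K" by (rule compact_imp_closed[OF Kc])
  have Uo: "open U" unfolding U_def using p X0(1) by (intro open_INT) auto
  have KA: "K \<subseteq> A" unfolding K_def using p by auto
  have AU: "A \<subseteq> U" unfolding U_def using p by auto
  have UKsub: "U - K \<subseteq> snd (p x) - fst (p x)" if "x \<in> X0" for x
    using that unfolding U_def K_def by auto
  have cU: "closed (- U)" using Uo by (simp add: closed_Compl)
  have dUK: "- U \<inter> K = {}" using KA AU by auto
  obtain \<phi> :: "'w \<Rightarrow> real" where \<phi>: "continuous_on UNIV \<phi>" "\<forall>x. 0 \<le> \<phi> x \<and> \<phi> x \<le> 1"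
    "\<forall>x\<in>-U. \<phi> x = 0" "\<forall>x\<in>K. \<phi> x = 1"
    by (rule urysohn_real[OF cpt cU Kcl dUK])
  have \<phi>abs: "\<forall>x. \<bar>\<phi> x\<bar> \<le> 1" using \<phi>(2) by (simp add: abs_le_iff)
  define h where "h = mulc \<phi> f"
  have happ: "apply_bcontfun h x = \<phi> x *\<^sub>R apply_bcontfun f x" for x
    unfolding h_def by (rule mulc_apply[OF \<phi>(1) \<phi>abs])
  have hc: "continuous_on UNIV (apply_bcontfun h)" by simp
  obtain P1 where P1: "P1 \<in> borel_parts UNIV" "\<forall>B\<in>P1. \<forall>u\<in>B. \<forall>v\<in>B. dist (f u) (f v) < \<delta>"
    using fine_part[OF cpt fc \<delta>0] by blast
  obtain P2 where P2: "P2 \<in> borel_parts UNIV" "\<forall>B\<in>P2. \<forall>u\<in>B. \<forall>v\<in>B. dist (h u) (h v) < \<delta>"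
    using fine_part[OF cpt hc \<delta>0] by blast
  have P1f: "finite P1" "P1 \<subseteq> sets borel" "\<Union>P1 = UNIV" using P1(1) by (auto simp: borel_parts_def)
  have P2f: "finite P2" "P2 \<subseteq> sets borel" "\<Union>P2 = UNIV" using P2(1) by (auto simp: borel_parts_def)
  define SS where "SS = P1 \<union> P2 \<union> {A, K, U}"
  define R where "R = atoms SS"
  have Kb: "K \<in> sets borel" using Kcl by (rule borel_closed)
  have Ub: "U \<in> sets borel" using Uo by (rule borel_open)
  have Rbp: "R \<in> borel_parts UNIV" unfolding R_def
    by (rule atoms_parts) (use P1f P2f A Kb Ub in \<open>auto simp: SS_def\<close>)
  have Rf: "finite R" "R \<subseteq> sets borel" "disjoint R" using Rbp by (auto simp: borel_parts_def)
  have Rne: "\<And>D. D \<in> R \<Longrightarrow> D \<noteq> {}" unfolding R_def by (rule atoms_nonempty)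
  have R1: "\<forall>D\<in>R. \<exists>B\<in>P1. D \<subseteq> B"
    unfolding R_def using atoms_refine[of _ SS P1] P1f(3) by (auto simp: SS_def)
  have R2: "\<forall>D\<in>R. \<exists>B\<in>P2. D \<subseteq> B"
    unfolding R_def using atoms_refine[of _ SS P2] P2f(3) by (auto simp: SS_def)
  have dA: "D \<subseteq> A \<or> D \<inter> A = {}" if "D \<in> R" for D
    using atoms_dich[of D SS A] that unfolding R_def SS_def by simp
  have dK: "D \<subseteq> K \<or> D \<inter> K = {}" if "D \<in> R" for D
    using atoms_dich[of D SS K] that unfolding R_def SS_def by simp
  have dU: "D \<subseteq> U \<or> D \<inter> U = {}" if "D \<in> R" for D
    using atoms_dich[of D SS U] that unfolding R_def SS_def by simp
  have oscf: "osc (apply_bcontfun f) R \<delta>"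
    by (rule osc_refine[OF _ R1]) (use P1(2) in \<open>auto simp: osc_def intro: less_imp_le\<close>)
  have osch: "osc (apply_bcontfun h) R \<delta>"
    by (rule osc_refine[OF _ R2]) (use P2(2) in \<open>auto simp: osc_def intro: less_imp_le\<close>)
  have e1: "\<bar>pairing h m - RS (apply_bcontfun h) m R tg\<bar> \<le> \<delta> * V"
    unfolding V_def using pairing_RS[OF cpt m Rbp osch tags_tg] \<delta>0 by simp
  have e2: "\<bar>pairing f mr - RS (apply_bcontfun f) mr R tg\<bar> \<le> \<delta> * Vr"
    unfolding Vr_def using pairing_RS[OF cpt mr Rbp oscf tags_tg] \<delta>0 by simp
  define Rm where "Rm = {D\<in>R. D \<subseteq> U - K}"
  have Rm_sub: "Rm \<subseteq> R" by (auto simp: Rm_def)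
  define a where "a = (\<lambda>D. \<bar>blinfun_apply (m D) (f (tg D))\<bar>)"
  have termb: "\<bar>blinfun_apply (m D) (h (tg D)) - blinfun_apply (mr D) (f (tg D))\<bar>
      \<le> (if D \<in> Rm then a D else 0)" if D: "D \<in> R" for D
  proof -
    have s: "tg D \<in> D" using tg_in Rne[OF D] by blast
    have Db: "D \<in> sets borel" using Rf(2) D by blast
    have mrD: "mr D = m (A \<inter> D)" using Db by (simp add: mr_def restr_meas_def)
    have mh: "blinfun_apply (m D) (h (tg D)) = \<phi> (tg D) * blinfun_apply (m D) (f (tg D))"
      by (simp add: happ blinfun.scaleR_right)
    show ?thesis
    proof (cases "D \<subseteq> K")
      case True
      then have "\<phi> (tg D) = 1" using \<phi>(4) s by blast
      moreover have "A \<inter> D = D" using True KA by blast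
      ultimately show ?thesis using mrD mh by (simp add: a_def)
    next
      case nK: False
      show ?thesis
      proof (cases "D \<inter> U = {}")
        case True
        then have "\<phi> (tg D) = 0" using \<phi>(3) s by blast
        moreover have "A \<inter> D = {}" using True AU by blast
        ultimately show ?thesis using mrD mh Mspace_empty[OF m] by (simp add: a_def)
      next
        case False
        have "D \<subseteq> U" using dU[OF D] False by blast
        moreover have "D \<inter> K = {}" using dK[OF D] nK by blast
        ultimately have "D \<in> Rm" using D by (auto simp: Rm_def)
        have "\<bar>blinfun_apply (m D) (h (tg D)) - blinfun_apply (mr D) (f (tg D))\<bar> \<le> a D"
        proof (cases "D \<subseteq> A")
          case True
          then have "A \<inter> D = D" by blast
          then have "blinfun_apply (m D) (h (tg D)) - blinfun_apply (mr D) (f (tg D))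
              = (\<phi> (tg D) - 1) * blinfun_apply (m D) (f (tg D))" using mrD mh by (simp add: algebra_simps)
          moreover have "\<bar>\<phi> (tg D) - 1\<bar> \<le> 1" using \<phi>(2) by (simp add: abs_le_iff)
          ultimately show ?thesis unfolding a_def
            by (simp add: abs_mult mult_left_le_one_le)
        next
          case False
          then have "A \<inter> D = {}" using dA[OF D] by blast
          then have "blinfun_apply (m D) (h (tg D)) - blinfun_apply (mr D) (f (tg D))
              = \<phi> (tg D) * blinfun_apply (m D) (f (tg D))" using mrD mh Mspace_empty[OF m] by simp
          then show ?thesis unfolding a_def using \<phi>abs
            by (simp add: abs_mult mult_left_le_one_le)
        qed
        then show ?thesis using \<open>D \<in> Rm\<close> by simp
      qed
    qed
  qed
  have e3: "\<bar>RS (apply_bcontfun h) m R tg - RS (apply_bcontfun f) mr R tg\<bar> \<le> (\<Sum>D\<in>Rm. a D)"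
  proof -
    have "RS (apply_bcontfun h) m R tg - RS (apply_bcontfun f) mr R tg =
        (\<Sum>D\<in>R. blinfun_apply (m D) (h (tg D)) - blinfun_apply (mr D) (f (tg D)))"
      unfolding RS_def by (simp add: sum_subtractf)
    also have "\<bar>\<dots>\<bar> \<le> (\<Sum>D\<in>R. \<bar>blinfun_apply (m D) (h (tg D)) - blinfun_apply (mr D) (f (tg D))\<bar>)"
      by (rule sum_abs)
    also have "\<dots> \<le> (\<Sum>D\<in>R. if D \<in> Rm then a D else 0)"
      by (rule sum_mono) (rule termb)
    also have "\<dots> = (\<Sum>D\<in>Rm. a D)"
      using Rf(1) Rm_sub by (simp add: sum.inter_restrict[symmetric] Int_absorb1)
    finally show ?thesis .
  qed
  have e4: "a D \<le> (\<Sum>x\<in>X0. \<bar>blinfun_apply (m D) x\<bar>) + \<delta> * norm (m D)" if "D \<in> Rm" for D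
  proof -
    have "f (tg D) \<in> (\<Union>x\<in>X0. ball x \<delta>)" using X0(2) by blast
    then obtain x where x: "x \<in> X0" "dist x (f (tg D)) < \<delta>" by auto
    have "a D = \<bar>blinfun_apply (m D) x + blinfun_apply (m D) (f (tg D) - x)\<bar>"
      by (simp add: a_def blinfun.diff_right)
    also have "\<dots> \<le> \<bar>blinfun_apply (m D) x\<bar> + \<bar>blinfun_apply (m D) (f (tg D) - x)\<bar>"
      by (rule abs_triangle_ineq)
    also have "\<bar>blinfun_apply (m D) (f (tg D) - x)\<bar> \<le> norm (m D) * norm (f (tg D) - x)"
      using norm_blinfun[of "m D"] by simp
    also have "\<dots> \<le> norm (m D) * \<delta>"
      using x(2) by (intro mult_left_mono) (auto simp: dist_norm norm_minus_commute)
    also have "\<bar>blinfun_apply (m D) x\<bar> \<le> (\<Sum>x\<in>X0. \<bar>blinfun_apply (m D) x\<bar>)"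
      by (rule member_le_sum[OF x(1)]) (auto simp: X0(1))
    finally show ?thesis by (simp add: mult.commute)
  qed
  have Rmf: "finite Rm" "Rm \<subseteq> sets borel" "disjoint Rm"
    using Rf Rm_sub by (auto intro: finite_subset pairwise_subset)
  have e5: "(\<Sum>D\<in>Rm. norm (m D)) \<le> V"
    unfolding V_def by (rule var_real[OF Mspace_var[OF m] Rmf])
  have e6: "(\<Sum>x\<in>X0. \<Sum>D\<in>Rm. \<bar>blinfun_apply (m D) x\<bar>) \<le> \<eta> / 4"
  proof -
    have "(\<Sum>D\<in>Rm. \<bar>blinfun_apply (m D) x\<bar>) \<le> \<eta>0" if x: "x \<in> X0" for x
    proof -
      have px: "compact (fst (p x))" "open (snd (p x))"
          "variation (\<lambda>B. blinfun_apply (m B) x) (snd (p x) - fst (p x)) < ereal \<eta>0"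
        using p x by auto
      have "ereal (\<Sum>D\<in>Rm. norm (blinfun_apply (m D) x)) \<le> variation (\<lambda>B. blinfun_apply (m B) x) (snd (p x) - fst (p x))"
      proof (rule var_fam[OF Rmf])
        show "\<Union> Rm \<subseteq> snd (p x) - fst (p x)" using UKsub[OF x] by (auto simp: Rm_def)
        show "snd (p x) - fst (p x) \<in> sets borel"
          using px by (intro sets.Diff borel_open borel_closed compact_imp_closed)
      qed
      then have "ereal (\<Sum>D\<in>Rm. norm (blinfun_apply (m D) x)) < ereal \<eta>0" using px(3) by (rule le_less_trans)
      then show ?thesis by simp
    qed
    then have "(\<Sum>x\<in>X0. \<Sum>D\<in>Rm. \<bar>blinfun_apply (m D) x\<bar>) \<le> (\<Sum>x\<in>X0. \<eta>0)"
      by (rule sum_mono)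
    also have "\<dots> = real (card X0) * \<eta>0" by simp
    finally show ?thesis using cardb by linarith
  qed
  have e7: "(\<Sum>D\<in>Rm. a D) \<le> \<eta> / 4 + \<delta> * V"
  proof -
    have "(\<Sum>D\<in>Rm. a D) \<le> (\<Sum>D\<in>Rm. (\<Sum>x\<in>X0. \<bar>blinfun_apply (m D) x\<bar>) + \<delta> * norm (m D))"
      by (rule sum_mono) (rule e4)
    also have "\<dots> = (\<Sum>x\<in>X0. \<Sum>D\<in>Rm. \<bar>blinfun_apply (m D) x\<bar>) + \<delta> * (\<Sum>D\<in>Rm. norm (m D))"
      by (simp add: sum.distrib sum_distrib_left sum.swap[of _ Rm X0])
    also have "\<dots> \<le> \<eta> / 4 + \<delta> * V"
      using e6 e5 \<delta>0 by (intro add_mono mult_left_mono) auto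
    finally show ?thesis .
  qed
  have "\<bar>pairing h m - pairing f mr\<bar> \<le> \<delta> * V + \<delta> * Vr + (\<eta> / 4 + \<delta> * V)"
    using e1 e2 e3 e7 by linarith
  also have "\<dots> = \<delta> * (2 * V + Vr) + \<eta> / 4" by (simp add: algebra_simps)
  also have "\<dots> \<le> \<eta>" using \<delta>V \<eta> by linarith
  finally show ?thesis using that \<phi>(1,2) unfolding h_def mr_def by blast
qed

lemma unif_bound:
  fixes x :: "nat \<Rightarrow> 'a::real_normed_vector"
  assumes "WUC x"
  shows "\<exists>C\<ge>0. \<forall>\<psi>. \<forall>G s. finite G \<longrightarrow> (\<forall>n. \<bar>s n\<bar> \<le> 1) \<longrightarrow>
            \<bar>blinfun_apply \<psi> (\<Sum>n\<in>G. s n *\<^sub>R x n) :: real\<bar> \<le> C * norm \<psi>"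
proof -
  define W where "W = {(\<Sum>n\<in>G. s n *\<^sub>R x n) | G s. finite G \<and> (\<forall>n. \<bar>s n\<bar> \<le> (1::real))}"
  define Cs where "Cs = (\<lambda>k::nat. {\<psi> :: 'a \<Rightarrow>\<^sub>L real. \<forall>v\<in>W. \<bar>blinfun_apply \<psi> v\<bar> \<le> real k})"
  have closed: "closed (Cs k)" for k
  proof -
    have "Cs k = (\<Inter>v\<in>W. {\<psi>. \<bar>blinfun_apply \<psi> v\<bar> \<le> real k})" by (auto simp: Cs_def)
    moreover have "closed {\<psi> :: 'a \<Rightarrow>\<^sub>L real. \<bar>blinfun_apply \<psi> v\<bar> \<le> real k}" for v
      by (intro closed_Collect_le continuous_intros)
    ultimately show ?thesis by auto
  qed
  have cover: "(\<Union>k. Cs k) = UNIV"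
  proof -
    have "\<psi> \<in> (\<Union>k. Cs k)" for \<psi> :: "'a \<Rightarrow>\<^sub>L real"
    proof -
      have sm: "summable (\<lambda>n. \<bar>blinfun_apply \<psi> (x n)\<bar>)" using assms by (simp add: WUC_def)
      define k where "k = nat \<lceil>suminf (\<lambda>n. \<bar>blinfun_apply \<psi> (x n)\<bar>)\<rceil>"
      have "\<bar>blinfun_apply \<psi> v\<bar> \<le> real k" if "v \<in> W" for v
      proof -
        obtain G s where v: "v = (\<Sum>n\<in>G. s n *\<^sub>R x n)" "finite G" "\<forall>n. \<bar>s n\<bar> \<le> 1"
          using \<open>v \<in> W\<close> by (auto simp: W_def)
        have "\<bar>blinfun_apply \<psi> v\<bar> = \<bar>\<Sum>n\<in>G. s n * blinfun_apply \<psi> (x n)\<bar>"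
          by (simp add: v blinfun.sum_right blinfun.scaleR_right)
        also have "\<dots> \<le> (\<Sum>n\<in>G. \<bar>s n * blinfun_apply \<psi> (x n)\<bar>)" by (rule sum_abs)
        also have "\<dots> \<le> (\<Sum>n\<in>G. \<bar>blinfun_apply \<psi> (x n)\<bar>)"
          using v(3) by (intro sum_mono) (simp add: abs_mult mult_left_le_one_le)
        also have "\<dots> \<le> suminf (\<lambda>n. \<bar>blinfun_apply \<psi> (x n)\<bar>)"
          by (rule sum_le_suminf[OF sm v(2)]) auto
        also have "\<dots> \<le> real k" unfolding k_def by linarith
        finally show ?thesis .
      qed
      then show ?thesis by (auto simp: Cs_def)
    qed
    then show ?thesis by blast
  qed
  have "\<exists>k. euclidean interior_of (Cs k) \<noteq> {}"
  proof (rule ccontr)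
    assume "\<not> ?thesis"
    then have "\<forall>T\<in>range Cs. closedin euclidean T \<and> euclidean interior_of T = {}"
      using closed by auto
    then have "euclidean interior_of \<Union>(range Cs) = {}"
      using Baire_category_alt[of "euclidean :: ('a \<Rightarrow>\<^sub>L real) topology" "range Cs"]
      by (simp add: completely_metrizable_space_euclidean) fast
    then show False using cover by (simp add: interior_of_openin)
  qed
  then obtain k \<psi>0 where "\<psi>0 \<in> euclidean interior_of (Cs k)" by blast
  then obtain T where T: "open T" "\<psi>0 \<in> T" "T \<subseteq> Cs k" by (auto simp: interior_of_def)
  then obtain r where r: "r > 0" "ball \<psi>0 r \<subseteq> Cs k" by (meson open_contains_ball subset_trans)
  define C where "C = 4 * real k / r"
  have C0: "C \<ge> 0" using r by (simp add: C_def)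
  have main: "\<bar>blinfun_apply \<psi> v\<bar> \<le> C * norm \<psi>" if v: "v \<in> W" for \<psi> v
  proof (cases "\<psi> = 0")
    case True then show ?thesis by simp
  next
    case False
    then have n: "norm \<psi> > 0" by simp
    define c where "c = r / (2 * norm \<psi>)"
    have c0: "c > 0" using n r by (simp add: c_def)
    have "\<psi>0 + c *\<^sub>R \<psi> \<in> ball \<psi>0 r"
      using n r by (simp add: c_def dist_norm)
    then have 1: "\<bar>blinfun_apply (\<psi>0 + c *\<^sub>R \<psi>) v\<bar> \<le> real k" using r(2) v by (auto simp: Cs_def)
    have "\<psi>0 \<in> ball \<psi>0 r" using r(1) by simp
    then have "\<psi>0 \<in> Cs k" using r(2) by (rule subsetD[rotated])
    then have 2: "\<bar>blinfun_apply \<psi>0 v\<bar> \<le> real k" using v unfolding Cs_def by blast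
    have "c * \<bar>blinfun_apply \<psi> v\<bar> = \<bar>blinfun_apply (\<psi>0 + c *\<^sub>R \<psi>) v - blinfun_apply \<psi>0 v\<bar>"
      using c0 by (simp add: blinfun.add_left blinfun.scaleR_left abs_mult)
    also have "\<dots> \<le> 2 * real k" using 1 2 by linarith
    finally have "\<bar>blinfun_apply \<psi> v\<bar> \<le> 2 * real k / c" using c0 by (simp add: field_simps)
    also have "\<dots> = C * norm \<psi>" using n r by (simp add: c_def C_def field_simps)
    finally show ?thesis .
  qed
  show ?thesis
  proof (intro exI[of _ C] conjI allI impI C0)
    fix \<psi> :: "'a \<Rightarrow>\<^sub>L real" and G :: "nat set" and s :: "nat \<Rightarrow> real" assume "finite G" "\<forall>n. \<bar>s n\<bar> \<le> 1"
    then have "(\<Sum>n\<in>G. s n *\<^sub>R x n) \<in> W" by (auto simp: W_def)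
    then show "\<bar>blinfun_apply \<psi> (\<Sum>n\<in>G. s n *\<^sub>R x n)\<bar> \<le> C * norm \<psi>" by (rule main)
  qed
qed

definition adm :: "('w::topological_space \<Rightarrow> real) \<Rightarrow> bool" where
  "adm \<phi> \<longleftrightarrow> continuous_on UNIV \<phi> \<and> (\<forall>t. 0 \<le> \<phi> t \<and> \<phi> t \<le> 1)"

lemma adm_abs: "adm \<phi> \<Longrightarrow> \<forall>t. \<bar>\<phi> t\<bar> \<le> 1"
  by (simp add: adm_def abs_le_iff)

lemma adm_compl: "adm \<phi> \<Longrightarrow> adm (\<lambda>t. 1 - \<phi> t)"
  unfolding adm_def by (auto intro!: continuous_intros)

lemma adm_cont: "adm \<phi> \<Longrightarrow> continuous_on UNIV \<phi>"
  by (simp add: adm_def)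

lemma mulc_app: "adm \<phi> \<Longrightarrow> apply_bcontfun (mulc \<phi> f) x = \<phi> x *\<^sub>R apply_bcontfun f x"
  by (rule mulc_apply[OF adm_cont adm_abs])

lemma mulc_add: "adm \<phi> \<Longrightarrow> mulc \<phi> (f + g) = mulc \<phi> f + mulc \<phi> g"
  by (rule bcontfun_eqI) (simp add: mulc_app scaleR_right_distrib)

lemma mulc_scaleR: "adm \<phi> \<Longrightarrow> mulc \<phi> (c *\<^sub>R f) = c *\<^sub>R mulc \<phi> f"
  by (rule bcontfun_eqI) (simp add: mulc_app)

lemma mulc_norm:
  fixes f :: "'w::topological_space \<Rightarrow>\<^sub>C 'e::real_normed_vector"
  assumes "adm \<phi>" shows "norm (mulc \<phi> f) \<le> norm f"
proof (rule norm_bound)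
  fix x
  have "norm (apply_bcontfun (mulc \<phi> f) x) = \<bar>\<phi> x\<bar> * norm (apply_bcontfun f x)"
    by (simp add: mulc_app[OF assms])
  also have "\<dots> \<le> 1 * norm f"
    using adm_abs[OF assms] norm_bounded[of f x] by (intro mult_mono) auto
  finally show "norm (apply_bcontfun (mulc \<phi> f) x) \<le> norm f" by simp
qed

lemma mulc_bl:
  assumes "adm \<phi>"
  shows "bounded_linear (mulc \<phi> :: ('w::topological_space \<Rightarrow>\<^sub>C 'e::real_normed_vector) \<Rightarrow> _)"
  by (rule bounded_linear_intro[where K=1])
     (simp_all add: mulc_add[OF assms] mulc_scaleR[OF assms] mulc_norm[OF assms])

definition mulL :: "('w::topological_space \<Rightarrow> real) \<Rightarrow> (('w \<Rightarrow>\<^sub>C 'e::real_normed_vector) \<Rightarrow>\<^sub>L ('w \<Rightarrow>\<^sub>C 'e))" where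
  "mulL \<phi> = Blinfun (mulc \<phi>)"

lemma mulL_apply: "adm \<phi> \<Longrightarrow> blinfun_apply (mulL \<phi>) g = mulc \<phi> g"
  unfolding mulL_def by (simp add: bounded_linear_Blinfun_apply[OF mulc_bl])

lemma near_attain:
  fixes \<psi> :: "'a::real_normed_vector \<Rightarrow>\<^sub>L real"
  assumes "0 < \<epsilon>"
  shows "\<exists>g. norm g \<le> 1 \<and> norm \<psi> - \<epsilon> \<le> blinfun_apply \<psi> g"
proof (rule ccontr)
  assume "\<not> ?thesis"
  then have H: "norm g \<le> 1 \<Longrightarrow> blinfun_apply \<psi> g < norm \<psi> - \<epsilon>" for g by force
  have b0: "0 < norm \<psi> - \<epsilon>" using H[of 0] by simp
  have "norm \<psi> \<le> norm \<psi> - \<epsilon>"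
  proof (rule norm_blinfun_bound)
    show "0 \<le> norm \<psi> - \<epsilon>" using b0 by simp
    fix x
    show "norm (blinfun_apply \<psi> x) \<le> (norm \<psi> - \<epsilon>) * norm x"
    proof (cases "x = 0")
      case True then show ?thesis by simp
    next
      case False
      define g where "g = x /\<^sub>R norm x"
      have ng: "norm g \<le> 1" "norm (- g) \<le> 1" using False by (simp_all add: g_def)
      have "\<bar>blinfun_apply \<psi> g\<bar> \<le> norm \<psi> - \<epsilon>"
        using H[OF ng(1)] H[OF ng(2)] by (simp add: blinfun.minus_right abs_le_iff)
      moreover have "blinfun_apply \<psi> x = norm x * blinfun_apply \<psi> g"
        using False by (simp add: g_def blinfun.scaleR_right)
      ultimately show ?thesis using False by (simp add: abs_mult mult.commute mult_left_mono)
    qed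
  qed
  then show False using assms by simp
qed

lemma split_norm:
  fixes \<psi> :: "('w::topological_space \<Rightarrow>\<^sub>C 'e::real_normed_vector) \<Rightarrow>\<^sub>L real"
  assumes \<phi>: "adm \<phi>"
  shows "norm (\<psi> o\<^sub>L mulL \<phi>) + norm (\<psi> o\<^sub>L mulL (\<lambda>t. 1 - \<phi> t)) \<le> norm \<psi>"
proof (rule field_le_epsilon)
  fix \<epsilon> :: real assume "0 < \<epsilon>"
  then have e2: "0 < \<epsilon> / 2" by simp
  have \<phi>': "adm (\<lambda>t. 1 - \<phi> t)" by (rule adm_compl[OF \<phi>])
  obtain g1 where g1: "norm g1 \<le> 1" "norm (\<psi> o\<^sub>L mulL \<phi>) - \<epsilon> / 2 \<le> blinfun_apply (\<psi> o\<^sub>L mulL \<phi>) g1"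
    using near_attain[OF e2] by blast
  obtain g2 where g2: "norm g2 \<le> 1"
    "norm (\<psi> o\<^sub>L mulL (\<lambda>t. 1 - \<phi> t)) - \<epsilon> / 2 \<le> blinfun_apply (\<psi> o\<^sub>L mulL (\<lambda>t. 1 - \<phi> t)) g2"
    using near_attain[OF e2] by blast
  define h where "h = mulc \<phi> g1 + mulc (\<lambda>t. 1 - \<phi> t) g2"
  have nh: "norm h \<le> 1"
  proof (rule norm_bound)
    fix x
    have "norm (apply_bcontfun h x) = norm (\<phi> x *\<^sub>R g1 x + (1 - \<phi> x) *\<^sub>R g2 x)"
      by (simp add: h_def mulc_app[OF \<phi>] mulc_app[OF \<phi>'])
    also have "\<dots> \<le> \<phi> x * norm (g1 x) + (1 - \<phi> x) * norm (g2 x)"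
      using \<phi> unfolding adm_def by (metis (no_types, lifting) abs_of_nonneg diff_ge_0_iff_ge norm_scaleR norm_triangle_ineq)
    also have "\<dots> \<le> \<phi> x * 1 + (1 - \<phi> x) * 1"
    proof -
      have "norm (g1 x) \<le> 1" using norm_bounded[of g1 x] g1(1) by linarith
      moreover have "norm (g2 x) \<le> 1" using norm_bounded[of g2 x] g2(1) by linarith
      ultimately show ?thesis using \<phi> unfolding adm_def
        by (intro add_mono mult_left_mono) auto
    qed
    finally show "norm (apply_bcontfun h x) \<le> 1" by simp
  qed
  have "blinfun_apply \<psi> h = blinfun_apply (\<psi> o\<^sub>L mulL \<phi>) g1 + blinfun_apply (\<psi> o\<^sub>L mulL (\<lambda>t. 1 - \<phi> t)) g2"
    by (simp add: h_def mulL_apply[OF \<phi>] mulL_apply[OF \<phi>'] blinfun.add_right)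
  moreover have "blinfun_apply \<psi> h \<le> norm \<psi>"
  proof -
    have "blinfun_apply \<psi> h \<le> norm \<psi> * norm h" using norm_blinfun[of \<psi> h] by simp
    also have "\<dots> \<le> norm \<psi>" using nh by (simp add: mult_left_le)
    finally show ?thesis .
  qed
  ultimately show "norm (\<psi> o\<^sub>L mulL \<phi>) + norm (\<psi> o\<^sub>L mulL (\<lambda>t. 1 - \<phi> t)) \<le> norm \<psi> + \<epsilon>"
    using g1(2) g2(2) by linarith
qed

lemma mulc_combine:
  assumes "adm \<phi>"
  shows "mulc \<phi> (Y + z) + mulc (\<lambda>t. 1 - \<phi> t) Y = Y + mulc \<phi> z"
  by (rule bcontfun_eqI) (simp add: mulc_app[OF assms] mulc_app[OF adm_compl[OF assms]] algebra_simps)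

lemma wuc_claim:
  fixes x :: "nat \<Rightarrow> ('w::topological_space \<Rightarrow>\<^sub>C 'e::real_normed_vector)"
  assumes C0: "C \<ge> 0"
    and CB: "\<And>\<psi> G s. finite G \<Longrightarrow> (\<forall>n. \<bar>s n\<bar> \<le> 1) \<Longrightarrow>
              \<bar>blinfun_apply \<psi> (\<Sum>n\<in>G. s n *\<^sub>R x n) :: real\<bar> \<le> C * norm \<psi>"
    and \<phi>: "\<And>n. adm (\<phi> n)"
    and F: "finite F"
  shows "\<And>\<psi> G s. finite G \<Longrightarrow> G \<inter> F = {} \<Longrightarrow> (\<forall>n. \<bar>s n\<bar> \<le> 1) \<Longrightarrow>
     \<bar>blinfun_apply \<psi> ((\<Sum>n\<in>F. mulc (\<phi> n) (s n *\<^sub>R x n)) + (\<Sum>n\<in>G. s n *\<^sub>R x n)) :: real\<bar> \<le> C * norm \<psi>"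
  using F
proof (induction F rule: finite_induct)
  case empty
  then show ?case using CB by simp
next
  case (insert a F)
  define Y where "Y = (\<Sum>n\<in>F. mulc (\<phi> n) (s n *\<^sub>R x n)) + (\<Sum>n\<in>G. s n *\<^sub>R x n)"
  define z where "z = s a *\<^sub>R x a"
  have aG: "a \<notin> G" using insert.prems(2) by blast
  have GF: "G \<inter> F = {}" using insert.prems(2) by blast
  have iGF: "insert a G \<inter> F = {}" using GF insert.hyps(2) by blast
  have v: "(\<Sum>n\<in>insert a F. mulc (\<phi> n) (s n *\<^sub>R x n)) + (\<Sum>n\<in>G. s n *\<^sub>R x n)
      = mulc (\<phi> a) (Y + z) + mulc (\<lambda>t. 1 - \<phi> a t) Y"
    unfolding mulc_combine[OF \<phi>] Y_def z_def using insert.hyps by (simp add: algebra_simps)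
  have Yz: "Y + z = (\<Sum>n\<in>F. mulc (\<phi> n) (s n *\<^sub>R x n)) + (\<Sum>n\<in>insert a G. s n *\<^sub>R x n)"
    unfolding Y_def z_def using aG insert.prems(1) by (simp add: algebra_simps)
  define \<psi>1 where "\<psi>1 = \<psi> o\<^sub>L mulL (\<phi> a)"
  define \<psi>2 where "\<psi>2 = \<psi> o\<^sub>L mulL (\<lambda>t. 1 - \<phi> a t)"
  have ev: "blinfun_apply \<psi> ((\<Sum>n\<in>insert a F. mulc (\<phi> n) (s n *\<^sub>R x n)) + (\<Sum>n\<in>G. s n *\<^sub>R x n))
      = blinfun_apply \<psi>1 (Y + z) + blinfun_apply \<psi>2 Y"
    unfolding v \<psi>1_def \<psi>2_def
    by (simp add: mulL_apply[OF \<phi>] mulL_apply[OF adm_compl[OF \<phi>]] blinfun.add_right mulc_add[OF \<phi>])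
  have 1: "\<bar>blinfun_apply \<psi>1 (Y + z)\<bar> \<le> C * norm \<psi>1"
    unfolding Yz by (rule insert.IH) (use insert.prems iGF in auto)
  have 2: "\<bar>blinfun_apply \<psi>2 Y\<bar> \<le> C * norm \<psi>2"
    unfolding Y_def by (rule insert.IH) (use insert.prems GF in auto)
  have 3: "norm \<psi>1 + norm \<psi>2 \<le> norm \<psi>"
    unfolding \<psi>1_def \<psi>2_def by (rule split_norm[OF \<phi>])
  have "\<bar>blinfun_apply \<psi>1 (Y + z) + blinfun_apply \<psi>2 Y\<bar> \<le> C * norm \<psi>1 + C * norm \<psi>2"
    using 1 2 by linarith
  also have "\<dots> = C * (norm \<psi>1 + norm \<psi>2)" by (simp add: algebra_simps)
  also have "\<dots> \<le> C * norm \<psi>" using 3 C0 by (rule mult_left_mono)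
  finally show ?case unfolding ev .
qed

lemma wuc_mul:
  fixes x :: "nat \<Rightarrow> ('w::topological_space \<Rightarrow>\<^sub>C 'e::real_normed_vector)"
  assumes W: "WUC x" and \<phi>: "\<And>n. adm (\<phi> n)"
  shows "WUC (\<lambda>n. mulc (\<phi> n) (x n))"
  unfolding WUC_def
proof
  fix \<psi> :: "('w \<Rightarrow>\<^sub>C 'e) \<Rightarrow>\<^sub>L real"
  obtain C where C0: "C \<ge> 0" and CB: "\<forall>\<psi>. \<forall>G s. finite G \<longrightarrow> (\<forall>n. \<bar>s n\<bar> \<le> 1) \<longrightarrow>
            \<bar>blinfun_apply \<psi> (\<Sum>n\<in>G. s n *\<^sub>R x n) :: real\<bar> \<le> C * norm \<psi>"
    using unif_bound[OF W] by blast
  define s where "s = (\<lambda>n. sgn (blinfun_apply \<psi> (mulc (\<phi> n) (x n))))"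
  have s1: "\<forall>n. \<bar>s n\<bar> \<le> 1" by (simp add: s_def abs_sgn_eq)
  show "summable (\<lambda>n. \<bar>blinfun_apply \<psi> (mulc (\<phi> n) (x n))\<bar>)"
  proof (rule summableI_nonneg_bounded)
    fix N
    have "(\<Sum>i<N. \<bar>blinfun_apply \<psi> (mulc (\<phi> i) (x i))\<bar>) =
        blinfun_apply \<psi> ((\<Sum>n\<in>{..<N}. mulc (\<phi> n) (s n *\<^sub>R x n)) + (\<Sum>n\<in>{}. s n *\<^sub>R x n))"
      by (simp add: blinfun.sum_right mulc_scaleR[OF \<phi>] blinfun.scaleR_right s_def abs_sgn mult.commute)
    also have "\<dots> \<le> \<bar>\<dots>\<bar>" by simp
    also have "\<dots> \<le> C * norm \<psi>"
      by (rule wuc_claim[OF C0 _ \<phi>]) (use CB s1 in auto)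
    finally show "(\<Sum>i<N. \<bar>blinfun_apply \<psi> (mulc (\<phi> i) (x i))\<bar>) \<le> C * norm \<psi>" .
  qed simp
qed

theorem proposition3:
  fixes H :: "('w::t2_space set \<Rightarrow> ('e::banach \<Rightarrow>\<^sub>L real)) set"
    and A :: "('w set \<Rightarrow> ('e \<Rightarrow>\<^sub>L real)) \<Rightarrow> 'w set"
  assumes "compact (UNIV :: 'w set)"
    and "V_subset H"
    and "\<And>m. m \<in> H \<Longrightarrow> A m \<in> sets borel"
  shows "V_subset ((\<lambda>m. restr_meas m (A m)) ` H)"
proof -
  note cpt = assms(1)
  note AB = assms(3)
  have HM: "H \<subseteq> Mspace" using assms(2) by (simp add: V_subset_def)
  have VH: "\<And>f :: nat \<Rightarrow> ('w \<Rightarrow>\<^sub>C 'e). WUC f \<Longrightarrow> \<forall>\<epsilon>>0. \<exists>N. \<forall>n\<ge>N. \<forall>m\<in>H. \<bar>pairing (f n) m\<bar> \<le> \<epsilon>"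
    using assms(2) by (simp add: V_subset_def)
  show ?thesis
    unfolding V_subset_def
  proof (intro conjI allI impI)
    show "(\<lambda>m. restr_meas m (A m)) ` H \<subseteq> Mspace"
      using restr_Mspace HM AB by blast
  next
    fix f :: "nat \<Rightarrow> ('w \<Rightarrow>\<^sub>C 'e)" and \<epsilon> :: real
    assume Wf: "WUC f" and e: "0 < \<epsilon>"
    show "\<exists>N. \<forall>n\<ge>N. \<forall>m\<in>(\<lambda>m. restr_meas m (A m)) ` H. \<bar>pairing (f n) m\<bar> \<le> \<epsilon>"
    proof (rule ccontr)
      assume nb: "\<not> ?thesis"
      define bad where "bad = (\<lambda>n. \<exists>m\<in>H. \<epsilon> < \<bar>pairing (f n) (restr_meas m (A m))\<bar>)"
      have badN: "\<exists>n\<ge>N. bad n" for N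
      proof (rule ccontr)
        assume "\<not> (\<exists>n\<ge>N. bad n)"
        then have "\<forall>n\<ge>N. \<forall>m\<in>(\<lambda>m. restr_meas m (A m)) ` H. \<bar>pairing (f n) m\<bar> \<le> \<epsilon>"
          by (auto simp: bad_def not_less)
        then show False using nb by blast
      qed
      have e2: "0 < \<epsilon> / 2" using e by simp
      have "\<forall>n. \<exists>p. adm (fst p) \<and> (bad n \<longrightarrow> snd p \<in> H \<and>
          \<epsilon> < \<bar>pairing (f n) (restr_meas (snd p) (A (snd p)))\<bar> \<and>
          \<bar>pairing (mulc (fst p) (f n)) (snd p) - pairing (f n) (restr_meas (snd p) (A (snd p)))\<bar> \<le> \<epsilon> / 2)"
      proof
        fix n
        show "\<exists>p. adm (fst p) \<and> (bad n \<longrightarrow> snd p \<in> H \<and>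
          \<epsilon> < \<bar>pairing (f n) (restr_meas (snd p) (A (snd p)))\<bar> \<and>
          \<bar>pairing (mulc (fst p) (f n)) (snd p) - pairing (f n) (restr_meas (snd p) (A (snd p)))\<bar> \<le> \<epsilon> / 2)"
        proof (cases "bad n")
          case True
          then obtain m where m: "m \<in> H" "\<epsilon> < \<bar>pairing (f n) (restr_meas m (A m))\<bar>"
            by (auto simp: bad_def)
          obtain \<phi> where \<phi>: "continuous_on UNIV \<phi>" "\<forall>x. 0 \<le> \<phi> x \<and> \<phi> x \<le> 1"
            "\<bar>pairing (mulc \<phi> (f n)) m - pairing (f n) (restr_meas m (A m))\<bar> \<le> \<epsilon> / 2"
            using approx[OF cpt _ AB[OF m(1)] e2, of m "f n"] HM m(1) by blast
          have "adm \<phi>" using \<phi>(1,2) by (simp add: adm_def)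
          then show ?thesis using m \<phi>(3) by (intro exI[of _ "(\<phi>, m)"]) simp
        next
          case False
          have "adm (\<lambda>_::'w. 0::real)" by (simp add: adm_def)
          then show ?thesis using False by (intro exI[of _ "((\<lambda>_. 0), undefined)"]) simp
        qed
      qed
      then obtain p where p: "\<forall>n. adm (fst (p n)) \<and> (bad n \<longrightarrow> snd (p n) \<in> H \<and>
          \<epsilon> < \<bar>pairing (f n) (restr_meas (snd (p n)) (A (snd (p n))))\<bar> \<and>
          \<bar>pairing (mulc (fst (p n)) (f n)) (snd (p n)) - pairing (f n) (restr_meas (snd (p n)) (A (snd (p n))))\<bar> \<le> \<epsilon> / 2)"
        by (rule choice[THEN exE])
      define \<phi> where "\<phi> = (\<lambda>n. fst (p n))"
      define mm where "mm = (\<lambda>n. snd (p n))"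
      have adm: "\<And>n. adm (\<phi> n)" using p by (simp add: \<phi>_def)
      have Wg: "WUC (\<lambda>n. mulc (\<phi> n) (f n))" by (rule wuc_mul[OF Wf adm])
      have e3: "0 < \<epsilon> / 3" using e by simp
      obtain N where N: "\<forall>n\<ge>N. \<forall>m\<in>H. \<bar>pairing (mulc (\<phi> n) (f n)) m\<bar> \<le> \<epsilon> / 3"
        using VH[OF Wg] e3 by blast
      obtain n where n: "n \<ge> N" "bad n" using badN by blast
      have 1: "mm n \<in> H" "\<epsilon> < \<bar>pairing (f n) (restr_meas (mm n) (A (mm n)))\<bar>"
        "\<bar>pairing (mulc (\<phi> n) (f n)) (mm n) - pairing (f n) (restr_meas (mm n) (A (mm n)))\<bar> \<le> \<epsilon> / 2"
        using p n(2) unfolding \<phi>_def mm_def by blast+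
      have "\<bar>pairing (mulc (\<phi> n) (f n)) (mm n)\<bar> \<le> \<epsilon> / 3" using N n(1) 1(1) by blast
      then show False using 1(2,3) e by linarith
    qed
  qed
qed

end
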